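(* Let $j\in\{\tfrac12,1,\tfrac32,\dots\}$, $\Delta>1$, $b\ge 1$, $1\le y\le b$, and let $\vec B=(B_1,B_2,B_3)\in\mathbb R^3$ with $B_1^2+B_2^2>0$. Consider on $\bigotimes_{x=1}^b\mathbb C^{2j+1}$ the operator $$H^{+-}(\vec B)=-\sum_{x=1}^{b-1}\Big[\tfrac1\Delta\big(S^1_xS^1_{x+1}+S^2_xS^2_{x+1}\big)+S^3_xS^3_{x+1}-j^2\mathbf 1\Big]-jA\,(S^3_1-S^3_b)+B_1S^1_y+B_2S^2_y+B_3S^3_y .$$ Then the ground state of $H^{+-}(\vec B)$ is (up to scalar multiples) the product state $\psi(z)=\bigotimes_{x=1}^b\chi_x(z)$ with $$z=-\frac{\|\vec B\|+B_3}{B_1-iB_2}\,q^{y},$$ and the ground state energy is $-j\|\vec B\|$.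
   Context: Each site carries $\mathbb C^{2j+1}$ with the spin-$j$ representation $S^1,S^2,S^3$ satisfying $[S^\alpha,S^\beta]=i\epsilon^{\alpha\beta\gamma}S^\gamma$; $S^\alpha_x$ denotes the copy acting on site $x$. Let $|m\rangle$, $m\in\{-j,-j+1,\dots,j\}$, be the standard basis with $S^3|m\rangle=m|m\rangle$ and $S^{\pm}=S^1\pm iS^2$ acting as $S^\pm|m\rangle=\sqrt{j(j+1)-m(m\pm1)}\,|m\pm1\rangle$. Set $A=\sqrt{1-\Delta^{-2}}$, and let $0<q<1$ be defined by $q+q^{-1}=2\Delta$. Put $w_m=\sqrt{\binom{2j}{m+j}}$ and, for $z\in\mathbb C$ and site $x$, $$\chi_x(z)=(1+|z|^2q^{-2x})^{-j}\sum_{m=-j}^{j}(zq^{-x})^{j-m}\,w_m\,|m\rangle .$$ $\|\vec B\|$ is the Euclidean norm of $\vec B$. *)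

theory Defs
  imports Complex_Main "HOL-Library.FuncSet"
begin

text \<open>Spin j = n/2 with n = 2j a positive natural number. The basis vector |m> of
  a single site is indexed by k = m + j in {0..n}. A basis configuration of the chain
  of b sites is a function sigma in PiE {1..b} (\<lambda>_. {0..n}); vectors of the tensor
  product are functions from configurations to complex numbers (only the values on
  configurations matter).\<close>

type_synonym cfg = "nat \<Rightarrow> nat"
type_synonym vec = "cfg \<Rightarrow> complex"

definition configs :: "nat \<Rightarrow> nat \<Rightarrow> cfg set" where
  "configs n b = PiE {1..b} (\<lambda>_. {0..n})"

definition spin_j :: "nat \<Rightarrow> real" where
  "spin_j n = real n / 2"

definition mval :: "nat \<Rightarrow> nat \<Rightarrow> real" where
  "mval n k = real k - spin_j n"

definition S3m :: "nat \<Rightarrow> nat \<Rightarrow> nat \<Rightarrow> complex" where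
  "S3m n k' k = (if k' = k then complex_of_real (mval n k) else 0)"

definition Spm :: "nat \<Rightarrow> nat \<Rightarrow> nat \<Rightarrow> complex" where
  "Spm n k' k = (if k' = k + 1 then complex_of_real
      (sqrt (spin_j n * (spin_j n + 1) - mval n k * (mval n k + 1))) else 0)"

definition Smm :: "nat \<Rightarrow> nat \<Rightarrow> nat \<Rightarrow> complex" where
  "Smm n k' k = (if k = k' + 1 then complex_of_real
      (sqrt (spin_j n * (spin_j n + 1) - mval n k * (mval n k - 1))) else 0)"

definition S1m :: "nat \<Rightarrow> nat \<Rightarrow> nat \<Rightarrow> complex" where
  "S1m n k' k = (Spm n k' k + Smm n k' k) / 2"

definition S2m :: "nat \<Rightarrow> nat \<Rightarrow> nat \<Rightarrow> complex" where
  "S2m n k' k = (Spm n k' k - Smm n k' k) / (2 * \<i>)"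

definition site_op :: "nat \<Rightarrow> (nat \<Rightarrow> nat \<Rightarrow> complex) \<Rightarrow> nat \<Rightarrow> vec \<Rightarrow> vec" where
  "site_op n M x v = (\<lambda>\<sigma>. \<Sum>k\<in>{0..n}. M (\<sigma> x) k * v (\<sigma>(x := k)))"

abbreviation S1 where "S1 n x \<equiv> site_op n (S1m n) x"
abbreviation S2 where "S2 n x \<equiv> site_op n (S2m n) x"
abbreviation S3 where "S3 n x \<equiv> site_op n (S3m n) x"

definition Aconst :: "real \<Rightarrow> real" where
  "Aconst \<Delta> = sqrt (1 - 1 / \<Delta>\<^sup>2)"

definition qpar :: "real \<Rightarrow> real" where
  "qpar \<Delta> = (THE q. 0 < q \<and> q < 1 \<and> q + 1 / q = 2 * \<Delta>)"

definition Hpm :: "nat \<Rightarrow> real \<Rightarrow> nat \<Rightarrow> nat \<Rightarrow> real \<Rightarrow> real \<Rightarrow> real \<Rightarrow> vec \<Rightarrow> vec" where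
  "Hpm n \<Delta> b y B1 B2 B3 v = (\<lambda>\<sigma>.
     - (\<Sum>x\<in>{1..<b}.
          complex_of_real (1 / \<Delta>) *
            (S1 n x (S1 n (x + 1) v) \<sigma> + S2 n x (S2 n (x + 1) v) \<sigma>)
          + S3 n x (S3 n (x + 1) v) \<sigma>
          - complex_of_real ((spin_j n)\<^sup>2) * v \<sigma>)
     - complex_of_real (spin_j n * Aconst \<Delta>) * (S3 n 1 v \<sigma> - S3 n b v \<sigma>)
     + complex_of_real B1 * S1 n y v \<sigma>
     + complex_of_real B2 * S2 n y v \<sigma>
     + complex_of_real B3 * S3 n y v \<sigma>)"

definition wcoef :: "nat \<Rightarrow> nat \<Rightarrow> real" where
  "wcoef n k = sqrt (real (n choose k))"

definition chi :: "nat \<Rightarrow> real \<Rightarrow> nat \<Rightarrow> complex \<Rightarrow> nat \<Rightarrow> complex" where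
  "chi n q x z k = complex_of_real ((1 + (cmod z)\<^sup>2 * (1 / q) ^ (2 * x)) powr (- spin_j n))
      * (z * complex_of_real ((1 / q) ^ x)) ^ (n - k) * complex_of_real (wcoef n k)"

definition psi :: "nat \<Rightarrow> real \<Rightarrow> nat \<Rightarrow> complex \<Rightarrow> vec" where
  "psi n q b z = (\<lambda>\<sigma>. if \<sigma> \<in> configs n b then (\<Prod>x\<in>{1..b}. chi n q x z (\<sigma> x)) else 0)"

definition normB :: "real \<Rightarrow> real \<Rightarrow> real \<Rightarrow> real" where
  "normB B1 B2 B3 = sqrt (B1\<^sup>2 + B2\<^sup>2 + B3\<^sup>2)"

definition in_space :: "nat \<Rightarrow> nat \<Rightarrow> vec \<Rightarrow> bool" where
  "in_space n b v \<longleftrightarrow> (\<forall>\<sigma>. \<sigma> \<notin> configs n b \<longrightarrow> v \<sigma> = 0)"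

definition is_eigen :: "nat \<Rightarrow> nat \<Rightarrow> (vec \<Rightarrow> vec) \<Rightarrow> complex \<Rightarrow> vec \<Rightarrow> bool" where
  "is_eigen n b H ev v \<longleftrightarrow> in_space n b v \<and> (\<exists>\<sigma>\<in>configs n b. v \<sigma> \<noteq> 0)
      \<and> (\<forall>\<sigma>\<in>configs n b. H v \<sigma> = ev * v \<sigma>)"

end

theory Submission
  imports Defs
begin


lemma configs_upd:
  assumes "\<sigma> \<in> configs n b" "x \<in> {1..b}" "k \<le> n"
  shows "\<sigma>(x := k) \<in> configs n b"
  using assms unfolding configs_def by (auto simp: PiE_iff extensional_def)

lemma configs_le: "\<sigma> \<in> configs n b \<Longrightarrow> x \<in> {1..b} \<Longrightarrow> \<sigma> x \<le> n"
  unfolding configs_def by (auto simp: PiE_iff)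

lemma configs_out: "\<sigma> \<in> configs n b \<Longrightarrow> x \<notin> {1..b} \<Longrightarrow> \<sigma> x = undefined"
  unfolding configs_def by (auto simp: PiE_iff extensional_def)

lemma finite_configs: "finite (configs n b)"
  unfolding configs_def by (simp add: finite_PiE)

lemma configs_eqI:
  assumes "\<sigma> \<in> configs n b" "\<tau> \<in> configs n b" "\<And>x. x \<in> {1..b} \<Longrightarrow> \<sigma> x = \<tau> x"
  shows "\<sigma> = \<tau>"
proof
  fix x show "\<sigma> x = \<tau> x"
    using assms configs_out[of \<sigma> n b x] configs_out[of \<tau> n b x] by (cases "x \<in> {1..b}") auto
qed

section \<open>Spin matrix elements\<close>

definition spr :: "nat \<Rightarrow> nat \<Rightarrow> real" where
  "spr n k = sqrt ((real n - real k) * (real k + 1))"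

lemma Spm_eq: "Spm n k' k = (if k' = Suc k then complex_of_real (spr n k) else 0)"
proof -
  have "spin_j n * (spin_j n + 1) - mval n k * (mval n k + 1) = (real n - real k) * (real k + 1)"
    unfolding spin_j_def mval_def by (simp add: field_simps power2_eq_square)
  then show ?thesis unfolding Spm_def spr_def by simp
qed

lemma Smm_eq: "Smm n k' k = (if k = Suc k' then complex_of_real (spr n k') else 0)"
proof (cases "k = Suc k'")
  case True
  have "spin_j n * (spin_j n + 1) - mval n k * (mval n k - 1) = (real n - real k') * (real k' + 1)"
    unfolding spin_j_def mval_def True by (simp add: field_simps power2_eq_square)
  then show ?thesis unfolding Smm_def spr_def using True by simp
qed (simp add: Smm_def)

lemma spr_pos: "k < n \<Longrightarrow> spr n k > 0"
  unfolding spr_def by simp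

lemma binom_id: "(real n - real k) * real (n choose k) = (real k + 1) * real (n choose Suc k)"
proof (cases "k < n")
  case True
  obtain m where m: "n = Suc m" using True by (cases n) auto
  have "(n - k) * (n choose k) = n * (m choose k)" using binomial_absorb_comp[of n k] m by simp
  moreover have "Suc k * (n choose Suc k) = n * (m choose k)" using Suc_times_binomial[of k m] m by simp
  ultimately have "(n - k) * (n choose k) = Suc k * (n choose Suc k)" by simp
  then have "real ((n - k) * (n choose k)) = real (Suc k * (n choose Suc k))" by simp
  then show ?thesis using True by (simp add: of_nat_diff algebra_simps)
next
  case False
  then show ?thesis by (cases "k = n") (auto simp: binomial_eq_0)
qed

lemma spr_w: "spr n k * wcoef n (Suc k) = (real n - real k) * wcoef n k"
proof (cases "k \<le> n")
  case True
  have "spr n k * wcoef n (Suc k) = sqrt ((real n - real k) * (real k + 1) * real (n choose Suc k))"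
    unfolding spr_def wcoef_def by (simp add: real_sqrt_mult)
  also have "\<dots> = sqrt ((real n - real k)^2 * real (n choose k))"
  proof -
    have "(real n - real k) * (real k + 1) * real (n choose Suc k) = (real n - real k) * ((real k + 1) * real (n choose Suc k))"
      by (simp add: mult.assoc)
    also have "\<dots> = (real n - real k) * ((real n - real k) * real (n choose k))" using binom_id[of n k] by simp
    also have "\<dots> = (real n - real k)^2 * real (n choose k)" by (simp add: power2_eq_square)
    finally show ?thesis by simp
  qed
  also have "\<dots> = (real n - real k) * wcoef n k"
    unfolding wcoef_def using True by (simp add: real_sqrt_mult)
  finally show ?thesis .
next
  case False
  then show ?thesis unfolding wcoef_def by (simp add: binomial_eq_0)
qed

lemma spr_w2: "spr n k * wcoef n k = (real k + 1) * wcoef n (Suc k)"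
proof (cases "k < n")
  case True
  have "spr n k * wcoef n k = sqrt ((real n - real k) * (real k + 1) * real (n choose k))"
    unfolding spr_def wcoef_def by (simp add: real_sqrt_mult)
  also have "\<dots> = sqrt ((real k + 1)^2 * real (n choose Suc k))"
  proof -
    have "(real n - real k) * (real k + 1) * real (n choose k) = (real k + 1) * ((real n - real k) * real (n choose k))"
      by (simp add: algebra_simps)
    also have "\<dots> = (real k + 1) * ((real k + 1) * real (n choose Suc k))" using binom_id[of n k] by simp
    also have "\<dots> = (real k + 1)^2 * real (n choose Suc k)" by (simp add: power2_eq_square)
    finally show ?thesis by simp
  qed
  also have "\<dots> = (real k + 1) * wcoef n (Suc k)"
    unfolding wcoef_def by (simp add: real_sqrt_mult)
  finally show ?thesis .
next
  case False
  then have "wcoef n (Suc k) = 0" unfolding wcoef_def by (simp add: binomial_eq_0)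
  moreover have "spr n k = 0 \<or> k > n" using False unfolding spr_def
    by (cases "k = n") auto
  moreover have "k > n \<Longrightarrow> wcoef n k = 0" unfolding wcoef_def by (simp add: binomial_eq_0)
  ultimately show ?thesis by auto
qed

section \<open>Multipliers of single-site operators on chi\<close>

definition cx :: "nat \<Rightarrow> real \<Rightarrow> nat \<Rightarrow> complex \<Rightarrow> real" where
  "cx n q x z = (1 + (cmod z)\<^sup>2 * (1 / q) ^ (2 * x)) powr (- spin_j n)"

definition Ux :: "real \<Rightarrow> nat \<Rightarrow> complex \<Rightarrow> complex" where
  "Ux q x z = z * complex_of_real ((1 / q) ^ x)"

lemma chi_eq: "chi n q x z k = complex_of_real (cx n q x z) * Ux q x z ^ (n - k) * complex_of_real (wcoef n k)"
  unfolding chi_def cx_def Ux_def by simp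

lemma mult_Spm:
  assumes "a \<le> n"
  shows "(\<Sum>k\<in>{0..n}. Spm n a k * chi n q x z k) = of_nat a * Ux q x z * chi n q x z a"
proof (cases a)
  case 0
  then show ?thesis by (simp add: Spm_eq)
next
  case (Suc a0)
  have "(\<Sum>k\<in>{0..n}. Spm n a k * chi n q x z k) = (\<Sum>k\<in>{0..n}. if k = a0 then of_real (spr n a0) * chi n q x z a0 else 0)"
    by (rule sum.cong) (auto simp: Spm_eq Suc)
  also have "\<dots> = of_real (spr n a0) * chi n q x z a0" using assms Suc by simp
  also have "\<dots> = of_nat a * Ux q x z * chi n q x z a"
  proof -
    have e: "n - a0 = Suc (n - a)" using assms Suc by simp
    have "of_real (spr n a0) * chi n q x z a0 = of_real (cx n q x z) * Ux q x z * Ux q x z ^ (n - a) * of_real (spr n a0 * wcoef n a0)"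
      unfolding chi_eq e by (simp add: algebra_simps)
    also have "\<dots> = of_real (cx n q x z) * Ux q x z * Ux q x z ^ (n - a) * of_real ((real a0 + 1) * wcoef n a)"
      using spr_w2[of n a0] Suc by simp
    also have "\<dots> = of_nat a * Ux q x z * chi n q x z a"
      unfolding chi_eq Suc by (simp add: algebra_simps)
    finally show ?thesis .
  qed
  finally show ?thesis .
qed

lemma mult_Smm:
  assumes "a \<le> n" "Ux q x z \<noteq> 0"
  shows "(\<Sum>k\<in>{0..n}. Smm n a k * chi n q x z k) = of_nat (n - a) / Ux q x z * chi n q x z a"
proof (cases "a = n")
  case True
  then show ?thesis by (simp add: Smm_eq)
next
  case False
  then have lt: "a < n" using assms by simp
  have "(\<Sum>k\<in>{0..n}. Smm n a k * chi n q x z k) = (\<Sum>k\<in>{0..n}. if k = Suc a then of_real (spr n a) * chi n q x z (Suc a) else 0)"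
    by (rule sum.cong) (auto simp: Smm_eq)
  also have "\<dots> = of_real (spr n a) * chi n q x z (Suc a)" using lt by simp
  also have "\<dots> = of_nat (n - a) / Ux q x z * chi n q x z a"
  proof -
    have e: "n - a = Suc (n - Suc a)" using lt by simp
    have "of_real (spr n a) * chi n q x z (Suc a) = of_real (cx n q x z) * Ux q x z ^ (n - Suc a) * of_real (spr n a * wcoef n (Suc a))"
      unfolding chi_eq by (simp add: algebra_simps)
    also have "\<dots> = of_real (cx n q x z) * Ux q x z ^ (n - Suc a) * of_real ((real n - real a) * wcoef n a)"
      using spr_w[of n a] by simp
    also have "\<dots> = of_nat (n - a) / Ux q x z * chi n q x z a"
      unfolding chi_eq e using assms(2) lt by (simp add: field_simps of_nat_diff)
    finally show ?thesis .
  qed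
  finally show ?thesis .
qed

lemma mult_S3m:
  assumes "a \<le> n"
  shows "(\<Sum>k\<in>{0..n}. S3m n a k * chi n q x z k) = of_real (mval n a) * chi n q x z a"
proof -
  have "(\<Sum>k\<in>{0..n}. S3m n a k * chi n q x z k) = (\<Sum>k\<in>{0..n}. if k = a then of_real (mval n a) * chi n q x z a else 0)"
    by (rule sum.cong) (auto simp: S3m_def)
  then show ?thesis using assms by simp
qed

definition mup :: "nat \<Rightarrow> real \<Rightarrow> nat \<Rightarrow> complex \<Rightarrow> nat \<Rightarrow> complex" where
  "mup n q x z a = of_nat a * Ux q x z"
definition mdn :: "nat \<Rightarrow> real \<Rightarrow> nat \<Rightarrow> complex \<Rightarrow> nat \<Rightarrow> complex" where
  "mdn n q x z a = of_nat (n - a) / Ux q x z"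

lemma mult_S1m:
  assumes "a \<le> n" "Ux q x z \<noteq> 0"
  shows "(\<Sum>k\<in>{0..n}. S1m n a k * chi n q x z k) = (mup n q x z a + mdn n q x z a) / 2 * chi n q x z a"
proof -
  have "(\<Sum>k\<in>{0..n}. S1m n a k * chi n q x z k) = (\<Sum>k\<in>{0..n}. (Spm n a k * chi n q x z k + Smm n a k * chi n q x z k) / 2)"
    by (rule sum.cong) (auto simp: S1m_def algebra_simps)
  also have "\<dots> = ((\<Sum>k\<in>{0..n}. Spm n a k * chi n q x z k) + (\<Sum>k\<in>{0..n}. Smm n a k * chi n q x z k)) / 2"
    by (simp only: sum_divide_distrib[symmetric] sum.distrib)
  finally have "(\<Sum>k\<in>{0..n}. S1m n a k * chi n q x z k) = ((\<Sum>k\<in>{0..n}. Spm n a k * chi n q x z k) + (\<Sum>k\<in>{0..n}. Smm n a k * chi n q x z k)) / 2" .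
  then show ?thesis using mult_Spm[OF assms(1)] mult_Smm[OF assms] unfolding mup_def mdn_def
    by (simp add: algebra_simps)
qed

lemma mult_S2m:
  assumes "a \<le> n" "Ux q x z \<noteq> 0"
  shows "(\<Sum>k\<in>{0..n}. S2m n a k * chi n q x z k) = (mup n q x z a - mdn n q x z a) / (2 * \<i>) * chi n q x z a"
proof -
  have "(\<Sum>k\<in>{0..n}. S2m n a k * chi n q x z k) = (\<Sum>k\<in>{0..n}. (Spm n a k * chi n q x z k - Smm n a k * chi n q x z k) / (2 * \<i>))"
    by (rule sum.cong) (auto simp: S2m_def algebra_simps)
  also have "\<dots> = ((\<Sum>k\<in>{0..n}. Spm n a k * chi n q x z k) - (\<Sum>k\<in>{0..n}. Smm n a k * chi n q x z k)) / (2 * \<i>)"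
    by (simp only: sum_divide_distrib[symmetric] sum_subtractf)
  finally have "(\<Sum>k\<in>{0..n}. S2m n a k * chi n q x z k) = ((\<Sum>k\<in>{0..n}. Spm n a k * chi n q x z k) - (\<Sum>k\<in>{0..n}. Smm n a k * chi n q x z k)) / (2 * \<i>)" .
  then show ?thesis using mult_Spm[OF assms(1)] mult_Smm[OF assms] unfolding mup_def mdn_def
    by (simp add: algebra_simps)
qed

section \<open>Product vectors\<close>

definition prodvec :: "nat \<Rightarrow> nat \<Rightarrow> (nat \<Rightarrow> nat \<Rightarrow> complex) \<Rightarrow> vec" where
  "prodvec n b F = (\<lambda>\<sigma>. if \<sigma> \<in> configs n b then (\<Prod>x\<in>{1..b}. F x (\<sigma> x)) else 0)"

lemma psi_prodvec: "psi n q b z = prodvec n b (\<lambda>x k. chi n q x z k)"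
  unfolding psi_def prodvec_def by simp

lemma prod_upd:
  fixes b x k :: nat and \<sigma> :: cfg and G :: "nat \<Rightarrow> nat \<Rightarrow> complex"
  assumes "x \<in> {1..b}"
  shows "(\<Prod>x'\<in>{1..b}. G x' ((\<sigma>(x := k)) x')) = G x k * (\<Prod>x'\<in>{1..b} - {x}. G x' (\<sigma> x'))"
proof -
  define H where "H = (\<lambda>x'. G x' ((\<sigma>(x := k)) x'))"
  have "prod H {1..b} = H x * prod H ({1..b} - {x})"
    using assms by (intro prod.remove) auto
  also have "prod H ({1..b} - {x}) = (\<Prod>x'\<in>{1..b} - {x}. G x' (\<sigma> x'))"
    unfolding H_def by (rule prod.cong) auto
  finally show ?thesis unfolding H_def by simp
qed

lemma site_op_cong:
  assumes "\<sigma> \<in> configs n b" "x \<in> {1..b}" "\<And>\<tau>. \<tau> \<in> configs n b \<Longrightarrow> v \<tau> = w \<tau>"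
  shows "site_op n M x v \<sigma> = site_op n M x w \<sigma>"
  unfolding site_op_def using assms configs_upd by (intro sum.cong) auto

lemma site_op_prodvec:
  assumes "\<sigma> \<in> configs n b" "x \<in> {1..b}"
  shows "site_op n M x (prodvec n b F) \<sigma> = prodvec n b (F(x := (\<lambda>a. \<Sum>k\<in>{0..n}. M a k * F x k))) \<sigma>"
proof -
  let ?R = "\<Prod>x'\<in>{1..b} - {x}. F x' (\<sigma> x')"
  have "site_op n M x (prodvec n b F) \<sigma> = (\<Sum>k\<in>{0..n}. M (\<sigma> x) k * (F x k * ?R))"
    unfolding site_op_def
  proof (rule sum.cong[OF refl])
    fix k assume "k \<in> {0..n}"
    then have "\<sigma>(x := k) \<in> configs n b" using configs_upd assms by auto
    then show "M (\<sigma> x) k * prodvec n b F (\<sigma>(x := k)) = M (\<sigma> x) k * (F x k * ?R)"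
      unfolding prodvec_def using prod_upd[OF assms(2), of F \<sigma> k] by simp
  qed
  also have "\<dots> = (\<Sum>k\<in>{0..n}. M (\<sigma> x) k * F x k) * ?R"
    by (simp add: sum_distrib_right mult.assoc)
  also have "\<dots> = prodvec n b (F(x := (\<lambda>a. \<Sum>k\<in>{0..n}. M a k * F x k))) \<sigma>"
  proof -
    have "\<sigma> = \<sigma>(x := \<sigma> x)" by simp
    have "(\<Prod>x'\<in>{1..b}. (F(x := (\<lambda>a. \<Sum>k\<in>{0..n}. M a k * F x k))) x' (\<sigma> x'))
        = (\<Sum>k\<in>{0..n}. M (\<sigma> x) k * F x k) * (\<Prod>x'\<in>{1..b} - {x}. (F(x := (\<lambda>a. \<Sum>k\<in>{0..n}. M a k * F x k))) x' (\<sigma> x'))"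
      using assms(2) by (simp add: prod.remove)
    also have "(\<Prod>x'\<in>{1..b} - {x}. (F(x := (\<lambda>a. \<Sum>k\<in>{0..n}. M a k * F x k))) x' (\<sigma> x')) = ?R"
      by (rule prod.cong) auto
    finally show ?thesis unfolding prodvec_def using assms(1) by simp
  qed
  finally show ?thesis .
qed

lemma prodvec_upd_mult:
  assumes "\<sigma> \<in> configs n b" "x \<in> {1..b}" "\<And>a. a \<le> n \<Longrightarrow> G a = \<mu> a * F x a"
  shows "prodvec n b (F(x := G)) \<sigma> = \<mu> (\<sigma> x) * prodvec n b F \<sigma>"
proof -
  have "(\<Prod>x'\<in>{1..b}. (F(x := G)) x' (\<sigma> x')) = G (\<sigma> x) * (\<Prod>x'\<in>{1..b} - {x}. (F(x := G)) x' (\<sigma> x'))"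
    using assms(2) by (simp add: prod.remove)
  also have "(\<Prod>x'\<in>{1..b} - {x}. (F(x := G)) x' (\<sigma> x')) = (\<Prod>x'\<in>{1..b} - {x}. F x' (\<sigma> x'))"
    by (rule prod.cong) auto
  also have "G (\<sigma> x) = \<mu> (\<sigma> x) * F x (\<sigma> x)" using assms configs_le by blast
  finally have "(\<Prod>x'\<in>{1..b}. (F(x := G)) x' (\<sigma> x')) = \<mu> (\<sigma> x) * (\<Prod>x'\<in>{1..b}. F x' (\<sigma> x'))"
    using assms(2) by (simp add: prod.remove mult.assoc)
  then show ?thesis unfolding prodvec_def using assms(1) by simp
qed

lemma site_op_mult:
  assumes "\<sigma> \<in> configs n b" "x \<in> {1..b}"
    "\<And>a. a \<le> n \<Longrightarrow> (\<Sum>k\<in>{0..n}. M a k * F x k) = \<mu> a * F x a"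
  shows "site_op n M x (prodvec n b F) \<sigma> = \<mu> (\<sigma> x) * prodvec n b F \<sigma>"
  using site_op_prodvec[OF assms(1,2)] prodvec_upd_mult[OF assms(1,2), of _ \<mu> F] assms(3) by simp

lemma site_op2_mult:
  assumes "\<sigma> \<in> configs n b" "x \<in> {1..b}" "x' \<in> {1..b}" "x \<noteq> x'"
    "\<And>a. a \<le> n \<Longrightarrow> (\<Sum>k\<in>{0..n}. M a k * F x k) = \<mu> a * F x a"
    "\<And>a. a \<le> n \<Longrightarrow> (\<Sum>k\<in>{0..n}. M' a k * F x' k) = \<mu>' a * F x' a"
  shows "site_op n M x (site_op n M' x' (prodvec n b F)) \<sigma> = \<mu> (\<sigma> x) * \<mu>' (\<sigma> x') * prodvec n b F \<sigma>"
proof -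
  define G where "G = (\<lambda>a. \<Sum>k\<in>{0..n}. M' a k * F x' k)"
  have "site_op n M x (site_op n M' x' (prodvec n b F)) \<sigma> = site_op n M x (prodvec n b (F(x' := G))) \<sigma>"
    using site_op_cong[OF assms(1,2)] site_op_prodvec[OF _ assms(3)] unfolding G_def by blast
  also have "\<dots> = \<mu> (\<sigma> x) * prodvec n b (F(x' := G)) \<sigma>"
    by (rule site_op_mult[OF assms(1,2)]) (use assms(4,5) in simp)
  also have "prodvec n b (F(x' := G)) \<sigma> = \<mu>' (\<sigma> x') * prodvec n b F \<sigma>"
    by (rule prodvec_upd_mult[OF assms(1,3)]) (use assms(6) G_def in simp)
  finally show ?thesis by simp
qed


section \<open>Kernels\<close>

definition agree_off :: "nat set \<Rightarrow> cfg \<Rightarrow> cfg \<Rightarrow> bool" where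
  "agree_off X \<sigma> \<tau> \<longleftrightarrow> (\<forall>x'. x' \<notin> X \<longrightarrow> \<sigma> x' = \<tau> x')"

definition k1 :: "(nat \<Rightarrow> nat \<Rightarrow> complex) \<Rightarrow> nat \<Rightarrow> cfg \<Rightarrow> cfg \<Rightarrow> complex" where
  "k1 M x \<sigma> \<tau> = (if agree_off {x} \<sigma> \<tau> then M (\<sigma> x) (\<tau> x) else 0)"

definition k2 :: "(nat \<Rightarrow> nat \<Rightarrow> complex) \<Rightarrow> (nat \<Rightarrow> nat \<Rightarrow> complex) \<Rightarrow> nat \<Rightarrow> cfg \<Rightarrow> cfg \<Rightarrow> complex" where
  "k2 M M' x \<sigma> \<tau> = (if agree_off {x, x + 1} \<sigma> \<tau> then M (\<sigma> x) (\<tau> x) * M' (\<sigma> (x + 1)) (\<tau> (x + 1)) else 0)"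

lemma agree_off_upd: "agree_off {x} \<sigma> \<tau> \<Longrightarrow> \<tau> = \<sigma>(x := \<tau> x)"
  unfolding agree_off_def by (auto simp: fun_eq_iff)

lemma site_op_k1:
  assumes "\<sigma> \<in> configs n b" "x \<in> {1..b}"
  shows "site_op n M x v \<sigma> = (\<Sum>\<tau>\<in>configs n b. k1 M x \<sigma> \<tau> * v \<tau>)"
proof -
  let ?S = "(\<lambda>k. \<sigma>(x := k)) ` {0..n}"
  have sub: "?S \<subseteq> configs n b" using configs_upd assms by auto
  have "(\<Sum>\<tau>\<in>configs n b. k1 M x \<sigma> \<tau> * v \<tau>) = (\<Sum>\<tau>\<in>?S. k1 M x \<sigma> \<tau> * v \<tau>)"
  proof (rule sum.mono_neutral_right[OF finite_configs sub], rule ballI)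
    fix \<tau> assume t: "\<tau> \<in> configs n b - ?S"
    show "k1 M x \<sigma> \<tau> * v \<tau> = 0"
    proof (cases "agree_off {x} \<sigma> \<tau>")
      case True
      then have "\<tau> = \<sigma>(x := \<tau> x)" by (rule agree_off_upd)
      moreover have "\<tau> x \<in> {0..n}" using t configs_le assms(2) by auto
      ultimately have "\<tau> \<in> ?S" by blast
      then show ?thesis using t by blast
    qed (simp add: k1_def)
  qed
  also have "\<dots> = (\<Sum>k\<in>{0..n}. k1 M x \<sigma> (\<sigma>(x := k)) * v (\<sigma>(x := k)))"
    by (rule sum.reindex_cong[where l = "\<lambda>k. \<sigma>(x := k)"]) (auto simp: inj_on_def fun_eq_iff split: if_splits)
  also have "\<dots> = site_op n M x v \<sigma>"
    unfolding site_op_def k1_def agree_off_def by simp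
  finally show ?thesis by simp
qed

lemma k1k1_k2:
  assumes "\<sigma> \<in> configs n b" "\<rho> \<in> configs n b" "x \<in> {1..b}" "x + 1 \<in> {1..b}"
  shows "(\<Sum>\<tau>\<in>configs n b. k1 M x \<sigma> \<tau> * k1 M' (x + 1) \<tau> \<rho>) = k2 M M' x \<sigma> \<rho>"
proof -
  define \<tau>0 where "\<tau>0 = \<sigma>(x := \<rho> x)"
  have t0: "\<tau>0 \<in> configs n b" unfolding \<tau>0_def using configs_upd configs_le assms by blast
  have "(\<Sum>\<tau>\<in>configs n b. k1 M x \<sigma> \<tau> * k1 M' (x + 1) \<tau> \<rho>) = k1 M x \<sigma> \<tau>0 * k1 M' (x + 1) \<tau>0 \<rho>
      + (\<Sum>\<tau>\<in>configs n b - {\<tau>0}. k1 M x \<sigma> \<tau> * k1 M' (x + 1) \<tau> \<rho>)"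
    using t0 by (simp add: sum.remove[OF finite_configs])
  also have "(\<Sum>\<tau>\<in>configs n b - {\<tau>0}. k1 M x \<sigma> \<tau> * k1 M' (x + 1) \<tau> \<rho>) = 0"
  proof (rule sum.neutral, rule ballI)
    fix \<tau> assume t: "\<tau> \<in> configs n b - {\<tau>0}"
    show "k1 M x \<sigma> \<tau> * k1 M' (x + 1) \<tau> \<rho> = 0"
    proof (cases "agree_off {x} \<sigma> \<tau> \<and> agree_off {x + 1} \<tau> \<rho>")
      case True
      then have "\<tau> = \<tau>0" unfolding \<tau>0_def agree_off_def by (auto simp: fun_eq_iff)
      then show ?thesis using t by blast
    qed (auto simp: k1_def)
  qed
  also have "k1 M x \<sigma> \<tau>0 * k1 M' (x + 1) \<tau>0 \<rho> = k2 M M' x \<sigma> \<rho>"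
    unfolding k1_def k2_def \<tau>0_def agree_off_def by auto
  finally show ?thesis by simp
qed

lemma site_op2_k2:
  assumes "\<sigma> \<in> configs n b" "x \<in> {1..b}" "x + 1 \<in> {1..b}"
  shows "site_op n M x (site_op n M' (x + 1) v) \<sigma> = (\<Sum>\<rho>\<in>configs n b. k2 M M' x \<sigma> \<rho> * v \<rho>)"
proof -
  have "site_op n M x (site_op n M' (x + 1) v) \<sigma> = (\<Sum>\<tau>\<in>configs n b. k1 M x \<sigma> \<tau> * site_op n M' (x + 1) v \<tau>)"
    by (rule site_op_k1[OF assms(1,2)])
  also have "\<dots> = (\<Sum>\<tau>\<in>configs n b. k1 M x \<sigma> \<tau> * (\<Sum>\<rho>\<in>configs n b. k1 M' (x + 1) \<tau> \<rho> * v \<rho>))"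
  proof (rule sum.cong[OF refl])
    fix \<tau> assume t: "\<tau> \<in> configs n b"
    show "k1 M x \<sigma> \<tau> * site_op n M' (x + 1) v \<tau> = k1 M x \<sigma> \<tau> * (\<Sum>\<rho>\<in>configs n b. k1 M' (x + 1) \<tau> \<rho> * v \<rho>)"
      by (simp only: site_op_k1[OF t assms(3)])
  qed
  also have "\<dots> = (\<Sum>\<tau>\<in>configs n b. \<Sum>\<rho>\<in>configs n b. k1 M x \<sigma> \<tau> * k1 M' (x + 1) \<tau> \<rho> * v \<rho>)"
    by (simp add: sum_distrib_left mult.assoc)
  also have "\<dots> = (\<Sum>\<rho>\<in>configs n b. \<Sum>\<tau>\<in>configs n b. k1 M x \<sigma> \<tau> * k1 M' (x + 1) \<tau> \<rho> * v \<rho>)"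
    by (rule sum.swap)
  also have "\<dots> = (\<Sum>\<rho>\<in>configs n b. (\<Sum>\<tau>\<in>configs n b. k1 M x \<sigma> \<tau> * k1 M' (x + 1) \<tau> \<rho>) * v \<rho>)"
    by (simp add: sum_distrib_right)
  also have "\<dots> = (\<Sum>\<rho>\<in>configs n b. k2 M M' x \<sigma> \<rho> * v \<rho>)"
  proof (rule sum.cong[OF refl])
    fix \<rho> assume r: "\<rho> \<in> configs n b"
    show "(\<Sum>\<tau>\<in>configs n b. k1 M x \<sigma> \<tau> * k1 M' (x + 1) \<tau> \<rho>) * v \<rho> = k2 M M' x \<sigma> \<rho> * v \<rho>"
      by (simp only: k1k1_k2[OF assms(1) r assms(2,3)])
  qed
  finally show ?thesis .
qed

definition dlt :: "cfg \<Rightarrow> cfg \<Rightarrow> complex" where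
  "dlt \<sigma> \<tau> = (if \<sigma> = \<tau> then 1 else 0)"

lemma sum_dlt: assumes that: "\<sigma> \<in> configs n b" shows "(\<Sum>\<tau>\<in>configs n b. dlt \<sigma> \<tau> * v \<tau>) = v \<sigma>"
proof -
  have "\<And>\<tau>. dlt \<sigma> \<tau> * v \<tau> = (if \<sigma> = \<tau> then v \<sigma> else 0)" unfolding dlt_def by simp
  then show ?thesis using that by (simp add: finite_configs)
qed

definition hopK :: "nat \<Rightarrow> real \<Rightarrow> nat \<Rightarrow> cfg \<Rightarrow> cfg \<Rightarrow> complex" where
  "hopK n \<Delta> x \<sigma> \<tau> = complex_of_real (1 / \<Delta>) * (k2 (S1m n) (S1m n) x \<sigma> \<tau> + k2 (S2m n) (S2m n) x \<sigma> \<tau>)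
     + k2 (S3m n) (S3m n) x \<sigma> \<tau> - complex_of_real ((spin_j n)\<^sup>2) * dlt \<sigma> \<tau>"

definition Kmat :: "nat \<Rightarrow> real \<Rightarrow> nat \<Rightarrow> nat \<Rightarrow> real \<Rightarrow> real \<Rightarrow> real \<Rightarrow> cfg \<Rightarrow> cfg \<Rightarrow> complex" where
  "Kmat n \<Delta> b y B1 B2 B3 \<sigma> \<tau> = - (\<Sum>x\<in>{1..<b}. hopK n \<Delta> x \<sigma> \<tau>)
     - complex_of_real (spin_j n * Aconst \<Delta>) * (k1 (S3m n) 1 \<sigma> \<tau> - k1 (S3m n) b \<sigma> \<tau>)
     + complex_of_real B1 * k1 (S1m n) y \<sigma> \<tau> + complex_of_real B2 * k1 (S2m n) y \<sigma> \<tau>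
     + complex_of_real B3 * k1 (S3m n) y \<sigma> \<tau>"

lemma Hpm_Kmat:
  assumes "\<sigma> \<in> configs n b" "b \<ge> 1" "y \<in> {1..b}"
  shows "Hpm n \<Delta> b y B1 B2 B3 v \<sigma> = (\<Sum>\<tau>\<in>configs n b. Kmat n \<Delta> b y B1 B2 B3 \<sigma> \<tau> * v \<tau>)"
proof -
  let ?C = "configs n b"
  have b1: "1 \<in> {1..b}" "b \<in> {1..b}" using assms by auto
  have hop: "complex_of_real (1 / \<Delta>) * (S1 n x (S1 n (x + 1) v) \<sigma> + S2 n x (S2 n (x + 1) v) \<sigma>)
          + S3 n x (S3 n (x + 1) v) \<sigma> - complex_of_real ((spin_j n)\<^sup>2) * v \<sigma>
        = (\<Sum>\<tau>\<in>?C. hopK n \<Delta> x \<sigma> \<tau> * v \<tau>)" if x: "x \<in> {1..<b}" for x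
  proof -
    have xx: "x \<in> {1..b}" "x + 1 \<in> {1..b}" using x by auto
    have "(\<Sum>\<tau>\<in>?C. hopK n \<Delta> x \<sigma> \<tau> * v \<tau>) =
        complex_of_real (1 / \<Delta>) * ((\<Sum>\<tau>\<in>?C. k2 (S1m n) (S1m n) x \<sigma> \<tau> * v \<tau>) + (\<Sum>\<tau>\<in>?C. k2 (S2m n) (S2m n) x \<sigma> \<tau> * v \<tau>))
        + (\<Sum>\<tau>\<in>?C. k2 (S3m n) (S3m n) x \<sigma> \<tau> * v \<tau>) - complex_of_real ((spin_j n)\<^sup>2) * (\<Sum>\<tau>\<in>?C. dlt \<sigma> \<tau> * v \<tau>)"
      unfolding hopK_def by (simp add: sum.distrib sum_subtractf sum_distrib_left ring_distribs mult.assoc)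
    then show ?thesis
      using site_op2_k2[OF assms(1) xx] sum_dlt[OF assms(1)] by simp
  qed
  have "Hpm n \<Delta> b y B1 B2 B3 v \<sigma> = - (\<Sum>x\<in>{1..<b}. \<Sum>\<tau>\<in>?C. hopK n \<Delta> x \<sigma> \<tau> * v \<tau>)
     - complex_of_real (spin_j n * Aconst \<Delta>) * ((\<Sum>\<tau>\<in>?C. k1 (S3m n) 1 \<sigma> \<tau> * v \<tau>) - (\<Sum>\<tau>\<in>?C. k1 (S3m n) b \<sigma> \<tau> * v \<tau>))
     + complex_of_real B1 * (\<Sum>\<tau>\<in>?C. k1 (S1m n) y \<sigma> \<tau> * v \<tau>) + complex_of_real B2 * (\<Sum>\<tau>\<in>?C. k1 (S2m n) y \<sigma> \<tau> * v \<tau>)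
     + complex_of_real B3 * (\<Sum>\<tau>\<in>?C. k1 (S3m n) y \<sigma> \<tau> * v \<tau>)"
    unfolding Hpm_def using hop site_op_k1[OF assms(1) b1(1)] site_op_k1[OF assms(1) b1(2)] site_op_k1[OF assms(1) assms(3)]
    by simp
  also have "(\<Sum>x\<in>{1..<b}. \<Sum>\<tau>\<in>?C. hopK n \<Delta> x \<sigma> \<tau> * v \<tau>) = (\<Sum>\<tau>\<in>?C. (\<Sum>x\<in>{1..<b}. hopK n \<Delta> x \<sigma> \<tau>) * v \<tau>)"
    unfolding sum_distrib_right by (rule sum.swap)
  also have "- (\<Sum>\<tau>\<in>?C. (\<Sum>x\<in>{1..<b}. hopK n \<Delta> x \<sigma> \<tau>) * v \<tau>)
     - complex_of_real (spin_j n * Aconst \<Delta>) * ((\<Sum>\<tau>\<in>?C. k1 (S3m n) 1 \<sigma> \<tau> * v \<tau>) - (\<Sum>\<tau>\<in>?C. k1 (S3m n) b \<sigma> \<tau> * v \<tau>))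
     + complex_of_real B1 * (\<Sum>\<tau>\<in>?C. k1 (S1m n) y \<sigma> \<tau> * v \<tau>) + complex_of_real B2 * (\<Sum>\<tau>\<in>?C. k1 (S2m n) y \<sigma> \<tau> * v \<tau>)
     + complex_of_real B3 * (\<Sum>\<tau>\<in>?C. k1 (S3m n) y \<sigma> \<tau> * v \<tau>)
     = (\<Sum>\<tau>\<in>?C. Kmat n \<Delta> b y B1 B2 B3 \<sigma> \<tau> * v \<tau>)"
  proof -
    have e: "Kmat n \<Delta> b y B1 B2 B3 \<sigma> \<tau> * v \<tau> = - ((\<Sum>x\<in>{1..<b}. hopK n \<Delta> x \<sigma> \<tau>) * v \<tau>)
      - complex_of_real (spin_j n * Aconst \<Delta>) * (k1 (S3m n) 1 \<sigma> \<tau> * v \<tau> - k1 (S3m n) b \<sigma> \<tau> * v \<tau>)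
      + complex_of_real B1 * (k1 (S1m n) y \<sigma> \<tau> * v \<tau>) + complex_of_real B2 * (k1 (S2m n) y \<sigma> \<tau> * v \<tau>)
      + complex_of_real B3 * (k1 (S3m n) y \<sigma> \<tau> * v \<tau>)" for \<tau>
      unfolding Kmat_def by (simp add: algebra_simps)
    show ?thesis unfolding e
      by (simp add: sum.distrib sum_subtractf sum_negf sum_distrib_left right_diff_distrib)
  qed
  finally show ?thesis .
qed


lemma qpar_props:
  assumes "\<Delta> > 1"
  shows "0 < qpar \<Delta> \<and> qpar \<Delta> < 1 \<and> qpar \<Delta> + 1 / qpar \<Delta> = 2 * \<Delta>"
proof -
  define s where "s = sqrt (\<Delta>\<^sup>2 - 1)"
  define q0 where "q0 = \<Delta> - s"
  have s1: "s < \<Delta>" unfolding s_def using assms by (intro real_less_lsqrt) auto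
  have s2: "\<Delta> - 1 < s" unfolding s_def using assms
    by (intro real_less_rsqrt) (simp add: power2_eq_square algebra_simps)
  have ss: "s * s = \<Delta>\<^sup>2 - 1" unfolding s_def using assms
    by (simp add: abs_square_less_1 power2_eq_square[symmetric] abs_if)
  have q0p: "0 < q0" "q0 < 1" using s1 s2 unfolding q0_def by auto
  have "q0 * (\<Delta> + s) = 1" unfolding q0_def using ss by (simp add: algebra_simps power2_eq_square)
  then have "1 / q0 = \<Delta> + s" using q0p by (simp add: field_simps)
  then have P: "0 < q0 \<and> q0 < 1 \<and> q0 + 1 / q0 = 2 * \<Delta>" using q0p unfolding q0_def by simp
  have U: "q = q0" if h: "0 < q \<and> q < 1 \<and> q + 1 / q = 2 * \<Delta>" for q
  proof -
    have qp: "0 < q" using h by simp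
    have e1: "(q - q0) * (1 - 1 / (q * q0)) = (q + 1 / q) - (q0 + 1 / q0)"
      using qp q0p(1) by (simp add: field_simps; (simp add: algebra_simps)?)
    have e2: "(q + 1 / q) - (q0 + 1 / q0) = 0" using h P by simp
    have l1: "q * q0 < q * 1" using h q0p by (intro mult_strict_left_mono) auto
    have l2: "q * 1 < 1" using h by simp
    have l3: "q * q0 < 1" using l1 l2 by linarith
    have "1 < inverse (q * q0)" by (rule one_less_inverse) (use l3 qp q0p in auto)
    then have ne: "1 - 1 / (q * q0) \<noteq> 0" unfolding inverse_eq_divide by linarith
    have "(q - q0) * (1 - 1 / (q * q0)) = 0" using e1 e2 by (simp only:)
    then have "q - q0 = 0 \<or> 1 - 1 / (q * q0) = 0" by (simp only: mult_eq_0_iff)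
    with ne show ?thesis by (simp only: right_minus_eq) blast
  qed
  have "qpar \<Delta> = q0" unfolding qpar_def by (rule the_equality) (rule P, erule U)
  then show ?thesis using P by simp
qed

lemma Aconst_q:
  assumes "0 < q" "q < 1" "q + 1 / q = 2 * \<Delta>"
  shows "Aconst \<Delta> = (1 / q - q) / (q + 1 / q)"
proof -
  have D: "\<Delta> = (q + 1 / q) / 2" using assms by simp
  have "1 < 1 / q" using assms(1,2) by simp
  then have "0 < 1 / q - q" using assms(2) by simp
  moreover have "0 < q + 1 / q" using assms(1) by (intro add_pos_pos) auto
  ultimately have pos: "0 < (1 / q - q) / (q + 1 / q)" by simp
  have gen: "1 - 1 / (s / 2)\<^sup>2 = (d / s)\<^sup>2" if "s > 0" "s\<^sup>2 - d\<^sup>2 = 4" for s d :: real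
  proof -
    have "1 - 1 / (s / 2)\<^sup>2 = (s\<^sup>2 - 4) / s\<^sup>2" using that(1) by (simp add: field_simps power2_eq_square)
    also have "\<dots> = d\<^sup>2 / s\<^sup>2" using that(2) by simp
    finally show ?thesis by (simp add: power_divide)
  qed
  have sd: "(q + 1 / q)\<^sup>2 - (1 / q - q)\<^sup>2 = 4" using assms(1) by (simp add: power2_eq_square field_simps)
  have "1 - 1 / \<Delta>\<^sup>2 = ((1 / q - q) / (q + 1 / q))\<^sup>2"
    unfolding D by (rule gen[OF _ sd]) (use assms(1) in \<open>intro add_pos_pos, auto\<close>)
  then have "Aconst \<Delta> = sqrt (((1 / q - q) / (q + 1 / q))\<^sup>2)" unfolding Aconst_def by simp
  also have "\<dots> = \<bar>(1 / q - q) / (q + 1 / q)\<bar>" by (rule real_sqrt_abs)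
  also have "\<dots> = (1 / q - q) / (q + 1 / q)" using pos by (rule abs_of_pos)
  finally show ?thesis .
qed


lemma c2:
  fixes U :: complex and q a a' n :: real
  assumes U: "U \<noteq> 0" and q: "0 < q"
  defines "U' \<equiv> U * complex_of_real (1 / q)"
  shows "of_real a * U * (of_real (n - a') / U') + of_real (n - a) / U * (of_real a' * U')
      = complex_of_real (a * (n - a') * q + (n - a) * a' / q)"
proof -
  have U'nz: "U' \<noteq> 0" unfolding U'_def using U q by simp
  have u1: "U / U' = of_real q" unfolding U'_def using U q by (simp add: divide_inverse)
  have u2: "U' / U = of_real (1 / q)" unfolding U'_def using U by simp
  have "of_real a * U * (of_real (n - a') / U') + of_real (n - a) / U * (of_real a' * U')
      = of_real (a * (n - a')) * (U / U') + of_real ((n - a) * a') * (U' / U)"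
    by (simp add: divide_inverse mult_ac)
  also have "\<dots> = of_real (a * (n - a') * q + (n - a) * a' / q)"
    unfolding u1 u2 by (simp add: divide_inverse)
  finally show ?thesis .
qed

lemma r:
  fixes q a a' j :: real
  assumes q: "0 < q"
  shows "(2 / (q + 1 / q)) * ((a * (2 * j - a') * q + (2 * j - a) * a' / q) / 2)
      + (a - j) * (a' - j) - j\<^sup>2 = - (j * ((1 / q - q) / (q + 1 / q))) * ((a - j) - (a' - j))"
proof -
  define X where "X = 1 / q"
  define s where "s = q + X"
  have "0 < q + 1 / q" by (intro add_pos_pos) (use q in auto)
  then have s: "s \<noteq> 0" unfolding s_def X_def by simp
  define A where "A = a * (2 * j - a') * q + (2 * j - a) * a' * X"
  define M where "M = (a - j) * (a' - j) - j\<^sup>2"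
  have poly: "A + s * M = - (j * (X - q)) * ((a - j) - (a' - j))"
    unfolding A_def M_def s_def by (simp add: algebra_simps power2_eq_square)
  have "(2 / (q + 1 / q)) * ((a * (2 * j - a') * q + (2 * j - a) * a' / q) / 2) = 2 / s * (A / 2)"
    unfolding A_def s_def X_def by simp
  also have "2 / s * (A / 2) = A / s" by simp
  finally have "(2 / (q + 1 / q)) * ((a * (2 * j - a') * q + (2 * j - a) * a' / q) / 2) + M = A / s + M"
    by simp
  also have "\<dots> = (A + s * M) / s" using s by (simp add: field_simps)
  also have "\<dots> = (- (j * (X - q)) * ((a - j) - (a' - j))) / s" by (simp only: poly)
  also have "\<dots> = - (j * ((1 / q - q) / (q + 1 / q))) * ((a - j) - (a' - j))"
    unfolding s_def X_def by simp
  finally show ?thesis unfolding M_def by simp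
qed

lemma idiv: "(P - M) / (2 * \<i>) = - \<i> * (P - M) / 2" for P M :: complex
  by (simp add: complex_eq_iff)
lemma c1: "(P + M) / 2 * ((P' + M') / 2) + (P - M) / (2 * \<i>) * ((P' - M') / (2 * \<i>)) = (P * M' + M * P') / 2"
    for P M P' M' :: complex
  unfolding idiv by (simp add: field_simps)
lemma c1f: "complex_of_real B1 * ((P + M) / 2) + complex_of_real B2 * ((P - M) / (2 * \<i>))
      = (Complex B1 (- B2) * P + Complex B1 B2 * M) / 2" for P M :: complex
  unfolding idiv Complex_eq by (simp add: field_simps)

lemma two_site:
  fixes U :: complex and q :: real and a a' n :: nat
  assumes U: "U \<noteq> 0" and q: "0 < q" and an: "a \<le> n" "a' \<le> n"
  defines "U' \<equiv> U * complex_of_real (1 / q)"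
  shows "complex_of_real (2 / (q + 1 / q)) *
     ((of_nat a * U + of_nat (n - a) / U) / 2 * ((of_nat a' * U' + of_nat (n - a') / U') / 2)
      + (of_nat a * U - of_nat (n - a) / U) / (2 * \<i>) * ((of_nat a' * U' - of_nat (n - a') / U') / (2 * \<i>)))
    + complex_of_real (mval n a) * complex_of_real (mval n a') - complex_of_real ((spin_j n)\<^sup>2)
    = - complex_of_real (spin_j n * ((1 / q - q) / (q + 1 / q))) * (complex_of_real (mval n a) - complex_of_real (mval n a'))"
proof -
  have na: "(of_nat (n - a) :: complex) = of_real (real n - real a)" using an by (simp add: of_nat_diff)
  have na': "(of_nat (n - a') :: complex) = of_real (real n - real a')" using an by (simp add: of_nat_diff)
  have a1: "(of_nat a :: complex) = of_real (real a)" "(of_nat a' :: complex) = of_real (real a')" by simp_all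
  define Y where "Y = real a * (real n - real a') * q + (real n - real a) * real a' / q"
  have inner: "(of_nat a * U + of_nat (n - a) / U) / 2 * ((of_nat a' * U' + of_nat (n - a') / U') / 2)
      + (of_nat a * U - of_nat (n - a) / U) / (2 * \<i>) * ((of_nat a' * U' - of_nat (n - a') / U') / (2 * \<i>))
      = complex_of_real (Y / 2)"
    unfolding c1 na na' a1 U'_def c2[OF U q] Y_def by simp
  have rr: "(2 / (q + 1 / q)) * (Y / 2) + mval n a * mval n a' - (spin_j n)\<^sup>2
      = - (spin_j n * ((1 / q - q) / (q + 1 / q))) * (mval n a - mval n a')"
    using r[OF q, of "real a" "spin_j n" "real a'"] unfolding Y_def mval_def spin_j_def by simp
  have "complex_of_real ((2 / (q + 1 / q)) * (Y / 2) + mval n a * mval n a' - (spin_j n)\<^sup>2)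
      = complex_of_real (- (spin_j n * ((1 / q - q) / (q + 1 / q))) * (mval n a - mval n a'))"
    by (simp only: rr)
  then show ?thesis unfolding inner by simp
qed


lemma inv_neg_div: "(1::complex) / (- c / d) = - d / c"
  by (cases "c = 0"; cases "d = 0") (simp_all add: field_simps)

lemma field_id:
  fixes a n :: nat and B1 B2 B3 :: real
  assumes B: "B1\<^sup>2 + B2\<^sup>2 > 0" and an: "a \<le> n"
  defines "N \<equiv> normB B1 B2 B3"
  defines "U \<equiv> - complex_of_real (N + B3) / Complex B1 (- B2)"
  shows "complex_of_real B1 * ((of_nat a * U + of_nat (n - a) / U) / 2)
     + complex_of_real B2 * ((of_nat a * U - of_nat (n - a) / U) / (2 * \<i>))
     + complex_of_real B3 * complex_of_real (mval n a) = complex_of_real (- spin_j n * N)"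
proof -
  define \<beta> where "\<beta> = Complex B1 (- B2)"
  have \<beta>nz: "\<beta> \<noteq> 0" unfolding \<beta>_def using B by (auto simp: complex_eq_iff)
  have NN: "N\<^sup>2 = B1\<^sup>2 + B2\<^sup>2 + B3\<^sup>2" unfolding N_def normB_def by simp
  have N0: "N \<ge> 0" unfolding N_def normB_def by simp
  have NB: "N + B3 > 0"
  proof -
    have "sqrt (B3\<^sup>2) < sqrt (B1\<^sup>2 + B2\<^sup>2 + B3\<^sup>2)" using B by (intro real_sqrt_less_mono) simp
    then have "\<bar>B3\<bar> < N" unfolding N_def normB_def by simp
    then show ?thesis by simp
  qed
  have NB0: "N + B3 \<noteq> 0" using NB by simp
  have cb: "Complex B1 B2 = cnj \<beta>" unfolding \<beta>_def by (simp add: complex_eq_iff)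
  have bb: "cnj \<beta> * \<beta> = complex_of_real ((N - B3) * (N + B3))"
    unfolding \<beta>_def using NN by (simp add: complex_eq_iff power2_eq_square algebra_simps)
  have bU: "\<beta> * U = - complex_of_real (N + B3)"
    unfolding U_def \<beta>_def[symmetric] using \<beta>nz by simp
  have Unz: "U \<noteq> 0" using bU NB by auto
  have iU: "1 / U = - \<beta> / complex_of_real (N + B3)"
  proof -
    have "U = - complex_of_real (N + B3) / \<beta>" unfolding U_def \<beta>_def by simp
    then show ?thesis by (simp only: inv_neg_div)
  qed
  have p1: "\<beta> * (of_nat a * U) = complex_of_real (- (real a * (N + B3)))"
  proof -
    have "\<beta> * (of_nat a * U) = of_nat a * (\<beta> * U)" by (simp only: mult_ac)
    also have "\<dots> = of_nat a * (- complex_of_real (N + B3))" by (simp only: bU)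
    also have "\<dots> = complex_of_real (- (real a * (N + B3)))" by (simp add: algebra_simps)
    finally show ?thesis .
  qed
  have cU: "cnj \<beta> / U = - complex_of_real (N - B3)"
  proof -
    have "cnj \<beta> / U = cnj \<beta> * (1 / U)" by simp
    also have "\<dots> = - (cnj \<beta> * \<beta>) / complex_of_real (N + B3)" unfolding iU by simp
    also have "\<dots> = - complex_of_real (((N - B3) * (N + B3)) / (N + B3))" unfolding bb by (simp only: of_real_divide minus_divide_left)
    also have "((N - B3) * (N + B3)) / (N + B3) = N - B3" using NB0 by simp
    finally show ?thesis .
  qed
  have p2: "cnj \<beta> * (of_nat (n - a) / U) = complex_of_real (- ((real n - real a) * (N - B3)))"
  proof -
    have "cnj \<beta> * (of_nat (n - a) / U) = of_nat (n - a) * (cnj \<beta> / U)" by simp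
    also have "\<dots> = complex_of_real (- ((real n - real a) * (N - B3)))"
      unfolding cU using an by (simp add: of_nat_diff algebra_simps)
    finally show ?thesis .
  qed
  have r: "(- (real a * (N + B3)) + - ((real n - real a) * (N - B3))) / 2 + B3 * mval n a = - spin_j n * N"
    unfolding mval_def spin_j_def by (simp add: field_simps)
  have "complex_of_real ((- (real a * (N + B3)) + - ((real n - real a) * (N - B3))) / 2 + B3 * mval n a)
      = complex_of_real (- spin_j n * N)" by (simp only: r)
  then show ?thesis unfolding c1f cb \<beta>_def[symmetric] p1 p2 by simp
qed




lemma cmod_diff_sq: "(cmod (a - b))\<^sup>2 = (cmod a)\<^sup>2 + (cmod b)\<^sup>2 - 2 * Re (cnj b * a)"
  unfolding cmod_power2 by (simp add: power2_eq_square algebra_simps)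

lemma cnj_mult_self: "cnj u * u = complex_of_real ((cmod u)\<^sup>2)"
  by (metis complex_norm_square mult.commute of_real_power)

lemma gst_identity:
  fixes C :: "'a set" and K :: "'a \<Rightarrow> 'a \<Rightarrow> complex" and \<psi> v :: "'a \<Rightarrow> complex" and E :: real
  assumes fin: "finite C" and nz: "\<forall>\<sigma>\<in>C. \<psi> \<sigma> \<noteq> 0"
    and eig: "\<forall>\<sigma>\<in>C. (\<Sum>\<tau>\<in>C. K \<sigma> \<tau> * \<psi> \<tau>) = of_real E * \<psi> \<sigma>"
    and re: "\<forall>\<sigma>\<in>C. \<forall>\<tau>\<in>C. \<sigma> \<noteq> \<tau> \<longrightarrow> Im (cnj (\<psi> \<sigma>) * K \<sigma> \<tau> * \<psi> \<tau>) = 0"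
    and sym: "\<forall>\<sigma>\<in>C. \<forall>\<tau>\<in>C. \<sigma> \<noteq> \<tau> \<longrightarrow> cnj (\<psi> \<sigma>) * K \<sigma> \<tau> * \<psi> \<tau> = cnj (\<psi> \<tau>) * K \<tau> \<sigma> * \<psi> \<sigma>"
  defines "f \<equiv> \<lambda>\<sigma>. v \<sigma> / \<psi> \<sigma>"
    and "w \<equiv> \<lambda>\<sigma> \<tau>. if \<sigma> = \<tau> then 0 else Re (cnj (\<psi> \<sigma>) * K \<sigma> \<tau> * \<psi> \<tau>)"
  shows "Re (\<Sum>\<sigma>\<in>C. cnj (v \<sigma>) * (\<Sum>\<tau>\<in>C. K \<sigma> \<tau> * v \<tau>)) - E * (\<Sum>\<sigma>\<in>C. (cmod (v \<sigma>))\<^sup>2)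
     = (\<Sum>\<sigma>\<in>C. \<Sum>\<tau>\<in>C. - w \<sigma> \<tau> / 2 * (cmod (f \<tau> - f \<sigma>))\<^sup>2)"
proof -
  have vf: "v \<sigma> = \<psi> \<sigma> * f \<sigma>" if "\<sigma> \<in> C" for \<sigma> using nz that unfolding f_def by simp
  have aw: "cnj (\<psi> \<sigma>) * K \<sigma> \<tau> * \<psi> \<tau> * (f \<tau> - f \<sigma>) = of_real (w \<sigma> \<tau>) * (f \<tau> - f \<sigma>)"
    if "\<sigma> \<in> C" "\<tau> \<in> C" for \<sigma> \<tau>
  proof (cases "\<sigma> = \<tau>")
    case False
    then have "cnj (\<psi> \<sigma>) * K \<sigma> \<tau> * \<psi> \<tau> = of_real (w \<sigma> \<tau>)"
      using re that unfolding w_def by (simp add: complex_eq_iff)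
    then show ?thesis by simp
  qed (simp add: w_def)
  have row: "cnj (v \<sigma>) * (\<Sum>\<tau>\<in>C. K \<sigma> \<tau> * v \<tau>) - of_real E * (cnj (v \<sigma>) * v \<sigma>)
      = (\<Sum>\<tau>\<in>C. of_real (w \<sigma> \<tau>) * (cnj (f \<sigma>) * (f \<tau> - f \<sigma>)))" if s: "\<sigma> \<in> C" for \<sigma>
  proof -
    have "(\<Sum>\<tau>\<in>C. of_real (w \<sigma> \<tau>) * (cnj (f \<sigma>) * (f \<tau> - f \<sigma>)))
        = (\<Sum>\<tau>\<in>C. cnj (f \<sigma>) * (cnj (\<psi> \<sigma>) * K \<sigma> \<tau> * \<psi> \<tau> * (f \<tau> - f \<sigma>)))"
      by (rule sum.cong[OF refl]) (simp add: aw[OF s])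
    also have "\<dots> = cnj (f \<sigma>) * cnj (\<psi> \<sigma>) * (\<Sum>\<tau>\<in>C. K \<sigma> \<tau> * (\<psi> \<tau> * f \<tau>))
        - cnj (f \<sigma>) * cnj (\<psi> \<sigma>) * f \<sigma> * (\<Sum>\<tau>\<in>C. K \<sigma> \<tau> * \<psi> \<tau>)"
      by (simp add: sum_distrib_left sum_subtractf algebra_simps)
    also have "\<dots> = cnj (v \<sigma>) * (\<Sum>\<tau>\<in>C. K \<sigma> \<tau> * v \<tau>) - of_real E * (cnj (v \<sigma>) * v \<sigma>)"
      using eig s vf by (simp add: algebra_simps)
    finally show ?thesis by simp
  qed
  have wsym: "w \<sigma> \<tau> = w \<tau> \<sigma>" if "\<sigma> \<in> C" "\<tau> \<in> C" for \<sigma> \<tau>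
    using sym that unfolding w_def by auto
  define X where "X = (\<Sum>\<sigma>\<in>C. \<Sum>\<tau>\<in>C. w \<sigma> \<tau> * (Re (cnj (f \<sigma>) * f \<tau>) - (cmod (f \<sigma>))\<^sup>2))"
  have "Re (\<Sum>\<sigma>\<in>C. cnj (v \<sigma>) * (\<Sum>\<tau>\<in>C. K \<sigma> \<tau> * v \<tau>)) - E * (\<Sum>\<sigma>\<in>C. (cmod (v \<sigma>))\<^sup>2)
      = Re (\<Sum>\<sigma>\<in>C. cnj (v \<sigma>) * (\<Sum>\<tau>\<in>C. K \<sigma> \<tau> * v \<tau>) - of_real E * (cnj (v \<sigma>) * v \<sigma>))"
    by (simp add: sum_subtractf cnj_mult_self sum_distrib_left)
  also have "\<dots> = Re (\<Sum>\<sigma>\<in>C. \<Sum>\<tau>\<in>C. of_real (w \<sigma> \<tau>) * (cnj (f \<sigma>) * (f \<tau> - f \<sigma>)))"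
    using row by (simp cong: sum.cong)
  also have "\<dots> = X"
    unfolding X_def cmod_power2 by (simp add: Re_sum algebra_simps power2_eq_square)
  finally have L: "Re (\<Sum>\<sigma>\<in>C. cnj (v \<sigma>) * (\<Sum>\<tau>\<in>C. K \<sigma> \<tau> * v \<tau>)) - E * (\<Sum>\<sigma>\<in>C. (cmod (v \<sigma>))\<^sup>2) = X" .
  have X2: "X = (\<Sum>\<sigma>\<in>C. \<Sum>\<tau>\<in>C. w \<sigma> \<tau> * (Re (cnj (f \<sigma>) * f \<tau>) - (cmod (f \<tau>))\<^sup>2))"
  proof -
    have "X = (\<Sum>\<tau>\<in>C. \<Sum>\<sigma>\<in>C. w \<tau> \<sigma> * (Re (cnj (f \<tau>) * f \<sigma>) - (cmod (f \<tau>))\<^sup>2))"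
      unfolding X_def by simp
    also have "\<dots> = (\<Sum>\<tau>\<in>C. \<Sum>\<sigma>\<in>C. w \<sigma> \<tau> * (Re (cnj (f \<sigma>) * f \<tau>) - (cmod (f \<tau>))\<^sup>2))"
      by (intro sum.cong refl) (simp add: wsym mult.commute)
    also have "\<dots> = (\<Sum>\<sigma>\<in>C. \<Sum>\<tau>\<in>C. w \<sigma> \<tau> * (Re (cnj (f \<sigma>) * f \<tau>) - (cmod (f \<tau>))\<^sup>2))"
      by (rule sum.swap)
    finally show ?thesis .
  qed
  have "2 * X = (\<Sum>\<sigma>\<in>C. \<Sum>\<tau>\<in>C. w \<sigma> \<tau> * (Re (cnj (f \<sigma>) * f \<tau>) - (cmod (f \<sigma>))\<^sup>2)
       + w \<sigma> \<tau> * (Re (cnj (f \<sigma>) * f \<tau>) - (cmod (f \<tau>))\<^sup>2))"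
    using X_def X2 by (simp add: sum.distrib)
  also have "\<dots> = (\<Sum>\<sigma>\<in>C. \<Sum>\<tau>\<in>C. - w \<sigma> \<tau> * (cmod (f \<tau> - f \<sigma>))\<^sup>2)"
    by (intro sum.cong refl) (simp add: cmod_diff_sq algebra_simps)
  finally have "X = (\<Sum>\<sigma>\<in>C. \<Sum>\<tau>\<in>C. - w \<sigma> \<tau> * (cmod (f \<tau> - f \<sigma>))\<^sup>2) / 2"
    by simp
  also have "\<dots> = (\<Sum>\<sigma>\<in>C. \<Sum>\<tau>\<in>C. - w \<sigma> \<tau> / 2 * (cmod (f \<tau> - f \<sigma>))\<^sup>2)"
    by (simp add: sum_divide_distrib)
  finally have "X = (\<Sum>\<sigma>\<in>C. \<Sum>\<tau>\<in>C. - w \<sigma> \<tau> / 2 * (cmod (f \<tau> - f \<sigma>))\<^sup>2)" .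
  with L show ?thesis by simp
qed


locale gst =
  fixes C :: "'a set" and K :: "'a \<Rightarrow> 'a \<Rightarrow> complex" and \<psi> :: "'a \<Rightarrow> complex" and E :: real
  assumes fin: "finite C" and nz: "\<forall>\<sigma>\<in>C. \<psi> \<sigma> \<noteq> 0"
    and eig: "\<forall>\<sigma>\<in>C. (\<Sum>\<tau>\<in>C. K \<sigma> \<tau> * \<psi> \<tau>) = of_real E * \<psi> \<sigma>"
    and re: "\<forall>\<sigma>\<in>C. \<forall>\<tau>\<in>C. \<sigma> \<noteq> \<tau> \<longrightarrow> Im (cnj (\<psi> \<sigma>) * K \<sigma> \<tau> * \<psi> \<tau>) = 0"
    and sym: "\<forall>\<sigma>\<in>C. \<forall>\<tau>\<in>C. \<sigma> \<noteq> \<tau> \<longrightarrow> cnj (\<psi> \<sigma>) * K \<sigma> \<tau> * \<psi> \<tau> = cnj (\<psi> \<tau>) * K \<tau> \<sigma> * \<psi> \<sigma>"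
    and nonpos: "\<forall>\<sigma>\<in>C. \<forall>\<tau>\<in>C. \<sigma> \<noteq> \<tau> \<longrightarrow> Re (cnj (\<psi> \<sigma>) * K \<sigma> \<tau> * \<psi> \<tau>) \<le> 0"
begin

definition "wt \<sigma> \<tau> = (if \<sigma> = \<tau> then 0 else Re (cnj (\<psi> \<sigma>) * K \<sigma> \<tau> * \<psi> \<tau>))"

lemma ident: "Re (\<Sum>\<sigma>\<in>C. cnj (v \<sigma>) * (\<Sum>\<tau>\<in>C. K \<sigma> \<tau> * v \<tau>)) - E * (\<Sum>\<sigma>\<in>C. (cmod (v \<sigma>))\<^sup>2)
     = (\<Sum>\<sigma>\<in>C. \<Sum>\<tau>\<in>C. - wt \<sigma> \<tau> / 2 * (cmod (v \<tau> / \<psi> \<tau> - v \<sigma> / \<psi> \<sigma>))\<^sup>2)"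
  using gst_identity[OF fin nz eig re sym, of v] unfolding wt_def by simp

lemma terms_nonneg: "\<sigma> \<in> C \<Longrightarrow> \<tau> \<in> C \<Longrightarrow> 0 \<le> - wt \<sigma> \<tau> / 2 * (cmod (v \<tau> / \<psi> \<tau> - v \<sigma> / \<psi> \<sigma>))\<^sup>2"
proof -
  assume a: "\<sigma> \<in> C" "\<tau> \<in> C"
  have "wt \<sigma> \<tau> \<le> 0" using nonpos a unfolding wt_def by auto
  then show ?thesis by (intro mult_nonneg_nonneg) auto
qed

lemma ground:
  assumes ev: "\<forall>\<sigma>\<in>C. (\<Sum>\<tau>\<in>C. K \<sigma> \<tau> * v \<tau>) = e * v \<sigma>" and ne: "\<exists>\<sigma>\<in>C. v \<sigma> \<noteq> 0"
  shows "E \<le> Re e"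
proof -
  let ?S = "\<Sum>\<sigma>\<in>C. (cmod (v \<sigma>))\<^sup>2"
  have S: "?S > 0"
  proof -
    obtain \<sigma> where "\<sigma> \<in> C" "v \<sigma> \<noteq> 0" using ne by blast
    then have "0 < (cmod (v \<sigma>))\<^sup>2" by simp
    also have "\<dots> \<le> ?S" using \<open>\<sigma> \<in> C\<close> fin by (intro member_le_sum) auto
    finally show ?thesis .
  qed
  have "Re (\<Sum>\<sigma>\<in>C. cnj (v \<sigma>) * (\<Sum>\<tau>\<in>C. K \<sigma> \<tau> * v \<tau>)) = Re (\<Sum>\<sigma>\<in>C. e * (cnj (v \<sigma>) * v \<sigma>))"
    using ev by (simp add: algebra_simps)
  also have "(\<Sum>\<sigma>\<in>C. e * (cnj (v \<sigma>) * v \<sigma>)) = e * of_real ?S"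
    by (simp add: cnj_mult_self sum_distrib_left of_real_sum)
  also have "Re (e * of_real ?S) = Re e * ?S" by simp
  finally have "Re e * ?S - E * ?S = (\<Sum>\<sigma>\<in>C. \<Sum>\<tau>\<in>C. - wt \<sigma> \<tau> / 2 * (cmod (v \<tau> / \<psi> \<tau> - v \<sigma> / \<psi> \<sigma>))\<^sup>2)"
    using ident[of v] by simp
  also have "\<dots> \<ge> 0" using terms_nonneg by (intro sum_nonneg) auto
  finally have "(Re e - E) * ?S \<ge> 0" by (simp add: algebra_simps)
  then show ?thesis using S by (simp add: zero_le_mult_iff)
qed

lemma ground_eq:
  assumes ev: "\<forall>\<sigma>\<in>C. (\<Sum>\<tau>\<in>C. K \<sigma> \<tau> * v \<tau>) = of_real E * v \<sigma>"
    and s: "\<sigma> \<in> C" "\<tau> \<in> C" "\<sigma> \<noteq> \<tau>" "Re (cnj (\<psi> \<sigma>) * K \<sigma> \<tau> * \<psi> \<tau>) < 0"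
  shows "v \<tau> / \<psi> \<tau> = v \<sigma> / \<psi> \<sigma>"
proof -
  let ?S = "\<Sum>\<sigma>\<in>C. (cmod (v \<sigma>))\<^sup>2"
  have "Re (\<Sum>\<sigma>\<in>C. cnj (v \<sigma>) * (\<Sum>\<tau>\<in>C. K \<sigma> \<tau> * v \<tau>)) = Re (\<Sum>\<sigma>\<in>C. of_real E * (cnj (v \<sigma>) * v \<sigma>))"
    using ev by (simp add: algebra_simps)
  also have "(\<Sum>\<sigma>\<in>C. of_real E * (cnj (v \<sigma>) * v \<sigma>)) = of_real E * of_real ?S"
    by (simp add: cnj_mult_self sum_distrib_left of_real_sum)
  also have "Re (of_real E * of_real ?S) = E * ?S" by simp
  finally have "0 = (\<Sum>\<sigma>\<in>C. \<Sum>\<tau>\<in>C. - wt \<sigma> \<tau> / 2 * (cmod (v \<tau> / \<psi> \<tau> - v \<sigma> / \<psi> \<sigma>))\<^sup>2)"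
    using ident[of v] by simp
  then have "\<forall>\<sigma>\<in>C. (\<Sum>\<tau>\<in>C. - wt \<sigma> \<tau> / 2 * (cmod (v \<tau> / \<psi> \<tau> - v \<sigma> / \<psi> \<sigma>))\<^sup>2) = 0"
    using fin terms_nonneg by (subst (asm) eq_commute, subst (asm) sum_nonneg_eq_0_iff) (auto intro!: sum_nonneg)
  then have "(\<Sum>\<tau>'\<in>C. - wt \<sigma> \<tau>' / 2 * (cmod (v \<tau>' / \<psi> \<tau>' - v \<sigma> / \<psi> \<sigma>))\<^sup>2) = 0" using s by blast
  then have "- wt \<sigma> \<tau> / 2 * (cmod (v \<tau> / \<psi> \<tau> - v \<sigma> / \<psi> \<sigma>))\<^sup>2 = 0"
    using fin terms_nonneg s by (subst (asm) sum_nonneg_eq_0_iff) auto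
  moreover have "wt \<sigma> \<tau> < 0" using s unfolding wt_def by simp
  ultimately show ?thesis by simp
qed

end


lemma tele:
  fixes g :: "nat \<Rightarrow> complex"
  assumes "1 \<le> b"
  shows "(\<Sum>x\<in>{1..<b}. g x - g (x + 1)) = g 1 - g b"
  using assms
proof (induction b rule: nat_induct_at_least)
  case base then show ?case by simp
next
  case (Suc m)
  then have "{1..<Suc m} = insert m {1..<m}" by auto
  then show ?case using Suc by simp
qed

locale chain =
  fixes n b y :: nat and \<Delta> B1 B2 B3 :: real
  assumes n1: "n \<ge> 1" and D1: "\<Delta> > 1" and b1: "b \<ge> 1" and y1: "1 \<le> y" and yb: "y \<le> b"
    and B: "B1\<^sup>2 + B2\<^sup>2 > 0"
begin

definition "q = qpar \<Delta>"
definition "N = normB B1 B2 B3"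
definition "\<beta> = Complex B1 (- B2)"
definition "z = - complex_of_real (N + B3) / Complex B1 (- B2) * complex_of_real (q ^ y)"

lemma q_props: "0 < q" "q < 1" "q + 1 / q = 2 * \<Delta>"
  using qpar_props[OF D1] unfolding q_def by auto

lemma invD: "1 / \<Delta> = 2 / (q + 1 / q)"
  using q_props by simp

lemma A_q: "Aconst \<Delta> = (1 / q - q) / (q + 1 / q)"
  using Aconst_q q_props by blast

lemma \<beta>nz: "\<beta> \<noteq> 0" unfolding \<beta>_def using B by (auto simp: complex_eq_iff)

lemma NB: "N + B3 > 0"
proof -
  have "sqrt (B3\<^sup>2) < sqrt (B1\<^sup>2 + B2\<^sup>2 + B3\<^sup>2)" using B by (intro real_sqrt_less_mono) simp
  then have "\<bar>B3\<bar> < N" unfolding N_def normB_def by simp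
  then show ?thesis by simp
qed

lemma z_nz: "z \<noteq> 0"
  unfolding z_def using NB \<beta>nz q_props(1) unfolding \<beta>_def by simp

lemma Ux_nz: "Ux q x z \<noteq> 0"
  unfolding Ux_def using z_nz q_props(1) by simp

lemma Ux_Suc: "Ux q (x + 1) z = Ux q x z * complex_of_real (1 / q)"
  unfolding Ux_def by simp

lemma Ux_y: "Ux q y z = - complex_of_real (N + B3) / Complex B1 (- B2)"
proof -
  have "q ^ y * (1 / q) ^ y = 1" using q_props(1) by (simp add: power_one_over)
  then have "complex_of_real (q ^ y) * complex_of_real ((1 / q) ^ y) = 1"
    by (metis of_real_1 of_real_mult)
  then show ?thesis unfolding Ux_def z_def by (simp add: mult.assoc)
qed

abbreviation "F \<equiv> (\<lambda>x k. chi n q x z k)"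
abbreviation "\<psi> \<equiv> psi n q b z"

definition "m1 x a = (mup n q x z a + mdn n q x z a) / 2"
definition "m2 x a = (mup n q x z a - mdn n q x z a) / (2 * \<i>)"
definition "m3 a = complex_of_real (mval n a)"

lemma M1: "a \<le> n \<Longrightarrow> (\<Sum>k\<in>{0..n}. S1m n a k * F x k) = m1 x a * F x a"
  unfolding m1_def using mult_S1m Ux_nz by blast
lemma M2: "a \<le> n \<Longrightarrow> (\<Sum>k\<in>{0..n}. S2m n a k * F x k) = m2 x a * F x a"
  unfolding m2_def using mult_S2m Ux_nz by blast
lemma M3: "a \<le> n \<Longrightarrow> (\<Sum>k\<in>{0..n}. S3m n a k * F x k) = m3 a * F x a"
  unfolding m3_def using mult_S3m by blast

lemma pair_id:
  assumes "a \<le> n" "a' \<le> n"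
  shows "complex_of_real (1 / \<Delta>) * (m1 x a * m1 (x + 1) a' + m2 x a * m2 (x + 1) a') + m3 a * m3 a'
      - complex_of_real ((spin_j n)\<^sup>2) = - complex_of_real (spin_j n * Aconst \<Delta>) * (m3 a - m3 a')"
  unfolding invD A_q m1_def m2_def m3_def mup_def mdn_def Ux_Suc
  using two_site[OF Ux_nz[of x] q_props(1) assms] by simp

lemma H_psi:
  assumes \<sigma>: "\<sigma> \<in> configs n b"
  shows "Hpm n \<Delta> b y B1 B2 B3 \<psi> \<sigma> = complex_of_real (- spin_j n * N) * \<psi> \<sigma>"
proof -
  have P: "\<psi> = prodvec n b F" by (rule psi_prodvec)
  have yy: "y \<in> {1..b}" "1 \<in> {1..b}" "b \<in> {1..b}" using y1 yb b1 by auto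
  define T where "T x = complex_of_real (1 / \<Delta>) * (m1 x (\<sigma> x) * m1 (x + 1) (\<sigma> (x + 1)) + m2 x (\<sigma> x) * m2 (x + 1) (\<sigma> (x + 1)))
      + m3 (\<sigma> x) * m3 (\<sigma> (x + 1)) - complex_of_real ((spin_j n)\<^sup>2)" for x
  have hop: "complex_of_real (1 / \<Delta>) * (S1 n x (S1 n (x + 1) \<psi>) \<sigma> + S2 n x (S2 n (x + 1) \<psi>) \<sigma>)
      + S3 n x (S3 n (x + 1) \<psi>) \<sigma> - complex_of_real ((spin_j n)\<^sup>2) * \<psi> \<sigma> = T x * \<psi> \<sigma>"
    if x: "x \<in> {1..<b}" for x
  proof -
    have xx: "x \<in> {1..b}" "x + 1 \<in> {1..b}" "x \<noteq> x + 1" using x by auto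
    have e1: "S1 n x (S1 n (x + 1) \<psi>) \<sigma> = m1 x (\<sigma> x) * m1 (x + 1) (\<sigma> (x + 1)) * \<psi> \<sigma>"
      unfolding P by (rule site_op2_mult[OF \<sigma> xx]) (rule M1, assumption)+
    have e2: "S2 n x (S2 n (x + 1) \<psi>) \<sigma> = m2 x (\<sigma> x) * m2 (x + 1) (\<sigma> (x + 1)) * \<psi> \<sigma>"
      unfolding P by (rule site_op2_mult[OF \<sigma> xx]) (rule M2, assumption)+
    have e3: "S3 n x (S3 n (x + 1) \<psi>) \<sigma> = m3 (\<sigma> x) * m3 (\<sigma> (x + 1)) * \<psi> \<sigma>"
      unfolding P by (rule site_op2_mult[OF \<sigma> xx]) (rule M3, assumption)+
    show ?thesis unfolding e1 e2 e3 T_def by (simp add: algebra_simps)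
  qed
  have Tx: "T x = - complex_of_real (spin_j n * Aconst \<Delta>) * (m3 (\<sigma> x) - m3 (\<sigma> (x + 1)))"
    if x: "x \<in> {1..<b}" for x
  proof -
    have "\<sigma> x \<le> n" "\<sigma> (x + 1) \<le> n" using x \<sigma> configs_le by auto
    then show ?thesis unfolding T_def by (rule pair_id)
  qed
  have sumT: "(\<Sum>x\<in>{1..<b}. T x) = - complex_of_real (spin_j n * Aconst \<Delta>) * (m3 (\<sigma> 1) - m3 (\<sigma> b))"
  proof -
    have "(\<Sum>x\<in>{1..<b}. T x) = (\<Sum>x\<in>{1..<b}. - complex_of_real (spin_j n * Aconst \<Delta>) * (m3 (\<sigma> x) - m3 (\<sigma> (x + 1))))"
      by (rule sum.cong[OF refl]) (rule Tx)
    also have "\<dots> = - complex_of_real (spin_j n * Aconst \<Delta>) * (\<Sum>x\<in>{1..<b}. m3 (\<sigma> x) - m3 (\<sigma> (x + 1)))"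
      by (simp add: sum_distrib_left)
    also have "(\<Sum>x\<in>{1..<b}. m3 (\<sigma> x) - m3 (\<sigma> (x + 1))) = m3 (\<sigma> 1) - m3 (\<sigma> b)"
      using tele[OF b1, of "\<lambda>x. m3 (\<sigma> x)"] by simp
    finally show ?thesis .
  qed
  have s1: "S1 n y \<psi> \<sigma> = m1 y (\<sigma> y) * \<psi> \<sigma>"
    unfolding P by (rule site_op_mult[OF \<sigma> yy(1)]) (rule M1)
  have s2: "S2 n y \<psi> \<sigma> = m2 y (\<sigma> y) * \<psi> \<sigma>"
    unfolding P by (rule site_op_mult[OF \<sigma> yy(1)]) (rule M2)
  have s3: "S3 n y \<psi> \<sigma> = m3 (\<sigma> y) * \<psi> \<sigma>"
    unfolding P by (rule site_op_mult[OF \<sigma> yy(1)]) (rule M3)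
  have s31: "S3 n 1 \<psi> \<sigma> = m3 (\<sigma> 1) * \<psi> \<sigma>"
    unfolding P by (rule site_op_mult[OF \<sigma> yy(2)]) (rule M3)
  have s3b: "S3 n b \<psi> \<sigma> = m3 (\<sigma> b) * \<psi> \<sigma>"
    unfolding P by (rule site_op_mult[OF \<sigma> yy(3)]) (rule M3)
  have fld: "complex_of_real B1 * m1 y (\<sigma> y) + complex_of_real B2 * m2 y (\<sigma> y) + complex_of_real B3 * m3 (\<sigma> y)
      = complex_of_real (- spin_j n * N)"
    unfolding m1_def m2_def m3_def mup_def mdn_def Ux_y N_def
    using field_id[OF B configs_le[OF \<sigma> yy(1)]] by simp
  have "Hpm n \<Delta> b y B1 B2 B3 \<psi> \<sigma> = - (\<Sum>x\<in>{1..<b}. T x * \<psi> \<sigma>)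
     - complex_of_real (spin_j n * Aconst \<Delta>) * (m3 (\<sigma> 1) * \<psi> \<sigma> - m3 (\<sigma> b) * \<psi> \<sigma>)
     + complex_of_real B1 * (m1 y (\<sigma> y) * \<psi> \<sigma>) + complex_of_real B2 * (m2 y (\<sigma> y) * \<psi> \<sigma>)
     + complex_of_real B3 * (m3 (\<sigma> y) * \<psi> \<sigma>)"
  proof -
    have sumhop: "(\<Sum>x\<in>{1..<b}. complex_of_real (1 / \<Delta>) * (S1 n x (S1 n (x + 1) \<psi>) \<sigma> + S2 n x (S2 n (x + 1) \<psi>) \<sigma>)
      + S3 n x (S3 n (x + 1) \<psi>) \<sigma> - complex_of_real ((spin_j n)\<^sup>2) * \<psi> \<sigma>) = (\<Sum>x\<in>{1..<b}. T x * \<psi> \<sigma>)"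
      by (rule sum.cong[OF refl]) (rule hop)
    show ?thesis unfolding Hpm_def sumhop s1 s2 s3 s31 s3b by (rule refl)
  qed
  also have "\<dots> = (- (\<Sum>x\<in>{1..<b}. T x) - complex_of_real (spin_j n * Aconst \<Delta>) * (m3 (\<sigma> 1) - m3 (\<sigma> b))
     + (complex_of_real B1 * m1 y (\<sigma> y) + complex_of_real B2 * m2 y (\<sigma> y) + complex_of_real B3 * m3 (\<sigma> y))) * \<psi> \<sigma>"
    by (simp add: sum_distrib_right algebra_simps)
  also have "\<dots> = complex_of_real (- spin_j n * N) * \<psi> \<sigma>"
    unfolding sumT fld by simp
  finally show ?thesis .
qed

end


lemma Spm_Smm_swap: "Spm n a c = Smm n c a"
  by (simp add: Spm_eq Smm_eq)

lemma cnj_Spm: "cnj (Spm n a c) = Spm n a c" by (simp add: Spm_eq)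
lemma cnj_Smm: "cnj (Smm n a c) = Smm n a c" by (simp add: Smm_eq)

lemma agree_off_sym: "agree_off X \<sigma> \<tau> = agree_off X \<tau> \<sigma>"
  unfolding agree_off_def by auto

lemma k1_swap: "k1 (Spm n) x \<tau> \<sigma> = k1 (Smm n) x \<sigma> \<tau>"
  unfolding k1_def using agree_off_sym Spm_Smm_swap by metis

lemma k2_swap: "k2 (Spm n) (Smm n) x \<tau> \<sigma> = k2 (Smm n) (Spm n) x \<sigma> \<tau>"
  unfolding k2_def using agree_off_sym Spm_Smm_swap by (metis mult.commute)

lemma k2_swap': "k2 (Smm n) (Spm n) x \<tau> \<sigma> = k2 (Spm n) (Smm n) x \<sigma> \<tau>"
  using k2_swap by metis

lemma k1_swap': "k1 (Smm n) x \<tau> \<sigma> = k1 (Spm n) x \<sigma> \<tau>"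
  using k1_swap by metis

lemma cnj_k1p: "cnj (k1 (Spm n) x \<sigma> \<tau>) = k1 (Spm n) x \<sigma> \<tau>" unfolding k1_def by (simp add: cnj_Spm)
lemma cnj_k1m: "cnj (k1 (Smm n) x \<sigma> \<tau>) = k1 (Smm n) x \<sigma> \<tau>" unfolding k1_def by (simp add: cnj_Smm)
lemma cnj_k2a: "cnj (k2 (Spm n) (Smm n) x \<sigma> \<tau>) = k2 (Spm n) (Smm n) x \<sigma> \<tau>"
  unfolding k2_def by (simp add: cnj_Spm cnj_Smm)
lemma cnj_k2b: "cnj (k2 (Smm n) (Spm n) x \<sigma> \<tau>) = k2 (Smm n) (Spm n) x \<sigma> \<tau>"
  unfolding k2_def by (simp add: cnj_Spm cnj_Smm)

lemma k1_S3_off: "\<sigma> \<noteq> \<tau> \<Longrightarrow> k1 (S3m n) x \<sigma> \<tau> = 0"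
  unfolding k1_def S3m_def agree_off_def by (auto simp: fun_eq_iff)

lemma k2_S3_off: "\<sigma> \<noteq> \<tau> \<Longrightarrow> k2 (S3m n) (S3m n) x \<sigma> \<tau> = 0"
  unfolding k2_def S3m_def agree_off_def by (auto simp: fun_eq_iff)

lemma k2_S12: "k2 (S1m n) (S1m n) x \<sigma> \<tau> + k2 (S2m n) (S2m n) x \<sigma> \<tau>
    = (k2 (Spm n) (Smm n) x \<sigma> \<tau> + k2 (Smm n) (Spm n) x \<sigma> \<tau>) / 2"
proof (cases "agree_off {x, x + 1} \<sigma> \<tau>")
  case True
  have "k2 (S1m n) (S1m n) x \<sigma> \<tau> + k2 (S2m n) (S2m n) x \<sigma> \<tau>
      = S1m n (\<sigma> x) (\<tau> x) * S1m n (\<sigma> (x + 1)) (\<tau> (x + 1)) + S2m n (\<sigma> x) (\<tau> x) * S2m n (\<sigma> (x + 1)) (\<tau> (x + 1))"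
    unfolding k2_def using True by simp
  also have "\<dots> = (Spm n (\<sigma> x) (\<tau> x) * Smm n (\<sigma> (x + 1)) (\<tau> (x + 1)) + Smm n (\<sigma> x) (\<tau> x) * Spm n (\<sigma> (x + 1)) (\<tau> (x + 1))) / 2"
    unfolding S1m_def S2m_def c1 by (rule refl)
  also have "\<dots> = (k2 (Spm n) (Smm n) x \<sigma> \<tau> + k2 (Smm n) (Spm n) x \<sigma> \<tau>) / 2"
    unfolding k2_def using True by simp
  finally show ?thesis .
qed (simp add: k2_def)

lemma k1_S12: "complex_of_real B1 * k1 (S1m n) y \<sigma> \<tau> + complex_of_real B2 * k1 (S2m n) y \<sigma> \<tau>
    = (Complex B1 (- B2) * k1 (Spm n) y \<sigma> \<tau> + Complex B1 B2 * k1 (Smm n) y \<sigma> \<tau>) / 2"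
proof (cases "agree_off {y} \<sigma> \<tau>")
  case True
  have "complex_of_real B1 * k1 (S1m n) y \<sigma> \<tau> + complex_of_real B2 * k1 (S2m n) y \<sigma> \<tau>
      = complex_of_real B1 * S1m n (\<sigma> y) (\<tau> y) + complex_of_real B2 * S2m n (\<sigma> y) (\<tau> y)"
    unfolding k1_def using True by simp
  also have "\<dots> = (Complex B1 (- B2) * Spm n (\<sigma> y) (\<tau> y) + Complex B1 B2 * Smm n (\<sigma> y) (\<tau> y)) / 2"
    unfolding S1m_def S2m_def c1f by (rule refl)
  also have "\<dots> = (Complex B1 (- B2) * k1 (Spm n) y \<sigma> \<tau> + Complex B1 B2 * k1 (Smm n) y \<sigma> \<tau>) / 2"
    unfolding k1_def using True by simp
  finally show ?thesis .
qed (simp add: k1_def)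

context chain
begin

definition "C = configs n b"
definition "Nf \<sigma> = (\<Sum>x\<in>{1..b}. n - \<sigma> x)"
definition "Pf \<sigma> = (\<Prod>x\<in>{1..b}. cx n q x z * ((1 / q) ^ x) ^ (n - \<sigma> x) * wcoef n (\<sigma> x))"
definition "G \<sigma> \<tau> = cnj (\<psi> \<sigma>) * \<psi> \<tau>"

lemma Nf_agree:
  assumes "X \<subseteq> {1..b}" "agree_off X \<sigma> \<tau>"
  shows "Nf \<sigma> + (\<Sum>x\<in>X. n - \<tau> x) = Nf \<tau> + (\<Sum>x\<in>X. n - \<sigma> x)"
proof -
  have r: "(\<Sum>x\<in>{1..b} - X. n - \<sigma> x) = (\<Sum>x\<in>{1..b} - X. n - \<tau> x)"
    using assms(2) unfolding agree_off_def by (intro sum.cong) auto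
  have "Nf \<sigma> = (\<Sum>x\<in>{1..b} - X. n - \<sigma> x) + (\<Sum>x\<in>X. n - \<sigma> x)"
    unfolding Nf_def using assms(1) by (intro sum.subset_diff) auto
  moreover have "Nf \<tau> = (\<Sum>x\<in>{1..b} - X. n - \<tau> x) + (\<Sum>x\<in>X. n - \<tau> x)"
    unfolding Nf_def using assms(1) by (intro sum.subset_diff) auto
  ultimately show ?thesis using r by simp
qed

lemma Pf_pos: "\<sigma> \<in> C \<Longrightarrow> Pf \<sigma> > 0"
  unfolding Pf_def C_def
proof (intro prod_pos ballI)
  fix x assume s: "\<sigma> \<in> configs n b" and x: "x \<in> {1..b}"
  have "0 \<le> (cmod z)\<^sup>2 * (1 / q) ^ (2 * x)" using q_props(1) by simp
  then have "1 + (cmod z)\<^sup>2 * (1 / q) ^ (2 * x) > 0" by linarith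
  then have "cx n q x z > 0" unfolding cx_def by simp
  moreover have "((1 / q) ^ x) ^ (n - \<sigma> x) > 0" using q_props(1) by simp
  moreover have "wcoef n (\<sigma> x) > 0" unfolding wcoef_def using configs_le[OF s x] by simp
  ultimately show "0 < cx n q x z * ((1 / q) ^ x) ^ (n - \<sigma> x) * wcoef n (\<sigma> x)" by simp
qed

lemma chi_form: "chi n q x z k = complex_of_real (cx n q x z * ((1 / q) ^ x) ^ (n - k) * wcoef n k) * z ^ (n - k)"
  unfolding chi_eq Ux_def by (simp add: power_mult_distrib)

lemma psi_form: "\<sigma> \<in> C \<Longrightarrow> \<psi> \<sigma> = complex_of_real (Pf \<sigma>) * z ^ Nf \<sigma>"
  unfolding psi_def C_def Pf_def Nf_def chi_form
  by (simp add: prod.distrib power_sum)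

lemma psi_nz: "\<sigma> \<in> C \<Longrightarrow> \<psi> \<sigma> \<noteq> 0"
  using psi_form Pf_pos z_nz by fastforce

lemma cnjz_pow: "cnj z ^ m * z ^ m = complex_of_real ((cmod z) ^ (2 * m))"
proof -
  have "cnj z ^ m * z ^ m = (cnj z * z) ^ m" by (simp add: power_mult_distrib)
  also have "cnj z * z = complex_of_real ((cmod z)\<^sup>2)" by (rule cnj_mult_self)
  finally show ?thesis by (simp add: power_mult)
qed

lemma G_form: "\<sigma> \<in> C \<Longrightarrow> \<tau> \<in> C \<Longrightarrow> G \<sigma> \<tau> = complex_of_real (Pf \<sigma> * Pf \<tau>) * (cnj z ^ Nf \<sigma> * z ^ Nf \<tau>)"
  unfolding G_def by (simp add: psi_form)

lemma G_eq: "\<sigma> \<in> C \<Longrightarrow> \<tau> \<in> C \<Longrightarrow> Nf \<sigma> = Nf \<tau> \<Longrightarrow> G \<sigma> \<tau> = complex_of_real (Pf \<sigma> * Pf \<tau> * (cmod z) ^ (2 * Nf \<sigma>))"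
  using G_form cnjz_pow by simp

lemma G_up: "\<sigma> \<in> C \<Longrightarrow> \<tau> \<in> C \<Longrightarrow> Nf \<tau> = Suc (Nf \<sigma>) \<Longrightarrow> G \<sigma> \<tau> = complex_of_real (Pf \<sigma> * Pf \<tau> * (cmod z) ^ (2 * Nf \<sigma>)) * z"
  using G_form[of \<sigma> \<tau>] cnjz_pow[of "Nf \<sigma>"] by (simp add: algebra_simps)

lemma G_dn: "\<sigma> \<in> C \<Longrightarrow> \<tau> \<in> C \<Longrightarrow> Nf \<sigma> = Suc (Nf \<tau>) \<Longrightarrow> G \<sigma> \<tau> = complex_of_real (Pf \<sigma> * Pf \<tau> * (cmod z) ^ (2 * Nf \<tau>)) * cnj z"
  using G_form[of \<sigma> \<tau>] cnjz_pow[of "Nf \<tau>"] by (simp add: algebra_simps)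

lemma betaz: "\<beta> * z = - complex_of_real ((N + B3) * q ^ y)"
proof -
  have "\<beta> * z = \<beta> * (- complex_of_real (N + B3) / \<beta>) * complex_of_real (q ^ y)"
    unfolding z_def \<beta>_def by (simp only: mult.assoc)
  also have "\<beta> * (- complex_of_real (N + B3) / \<beta>) = - complex_of_real (N + B3)" using \<beta>nz by simp
  finally show ?thesis by (simp add: algebra_simps)
qed

lemma cbetaz: "cnj \<beta> * cnj z = - complex_of_real ((N + B3) * q ^ y)"
proof -
  have "cnj \<beta> * cnj z = cnj (\<beta> * z)" by simp
  also have "\<dots> = - complex_of_real ((N + B3) * q ^ y)" unfolding betaz by simp
  finally show ?thesis .
qed

lemma betaz_pos: "(N + B3) * q ^ y > 0" using NB q_props(1) by simp

end


lemma k1p_eq: "k1 (Spm n) x \<sigma> \<tau> = (if agree_off {x} \<sigma> \<tau> \<and> \<sigma> x = Suc (\<tau> x) then complex_of_real (spr n (\<tau> x)) else 0)"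
  by (simp add: k1_def Spm_eq)
lemma k1m_eq: "k1 (Smm n) x \<sigma> \<tau> = (if agree_off {x} \<sigma> \<tau> \<and> \<tau> x = Suc (\<sigma> x) then complex_of_real (spr n (\<sigma> x)) else 0)"
  by (simp add: k1_def Smm_eq)
lemma k2a_eq: "k2 (Spm n) (Smm n) x \<sigma> \<tau> = (if agree_off {x, x + 1} \<sigma> \<tau> \<and> \<sigma> x = Suc (\<tau> x) \<and> \<tau> (x + 1) = Suc (\<sigma> (x + 1))
    then complex_of_real (spr n (\<tau> x) * spr n (\<sigma> (x + 1))) else 0)"
  by (simp add: k2_def Spm_eq Smm_eq)
lemma k2b_eq: "k2 (Smm n) (Spm n) x \<sigma> \<tau> = (if agree_off {x, x + 1} \<sigma> \<tau> \<and> \<tau> x = Suc (\<sigma> x) \<and> \<sigma> (x + 1) = Suc (\<tau> (x + 1))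
    then complex_of_real (spr n (\<sigma> x) * spr n (\<tau> (x + 1))) else 0)"
  by (simp add: k2_def Spm_eq Smm_eq)

lemma spr_nonneg: "k \<le> n \<Longrightarrow> spr n k \<ge> 0" unfolding spr_def by simp

context chain
begin

lemma cfg_le: "\<sigma> \<in> C \<Longrightarrow> x \<in> {1..b} \<Longrightarrow> \<sigma> x \<le> n"
  unfolding C_def using configs_le by blast

lemma F1:
  assumes s: "\<sigma> \<in> C" "\<tau> \<in> C"
  shows "\<exists>r. r \<ge> 0 \<and> \<beta> * G \<sigma> \<tau> * k1 (Spm n) y \<sigma> \<tau> = complex_of_real (- r)"
proof (cases "agree_off {y} \<sigma> \<tau> \<and> \<sigma> y = Suc (\<tau> y)")
  case True
  have yb': "y \<in> {1..b}" using y1 yb by simp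
  have le: "\<sigma> y \<le> n" "\<tau> y \<le> n" using cfg_le s yb' by auto
  have "Nf \<sigma> + (n - \<tau> y) = Nf \<tau> + (n - \<sigma> y)" using Nf_agree[of "{y}" \<sigma> \<tau>] True yb' by simp
  then have Nt: "Nf \<tau> = Suc (Nf \<sigma>)" using True le by simp
  define R where "R = Pf \<sigma> * Pf \<tau> * (cmod z) ^ (2 * Nf \<sigma>)"
  have R0: "R \<ge> 0" unfolding R_def using Pf_pos[OF s(1)] Pf_pos[OF s(2)] by simp
  have "\<beta> * G \<sigma> \<tau> * k1 (Spm n) y \<sigma> \<tau> = complex_of_real (R * spr n (\<tau> y)) * (\<beta> * z)"
    unfolding G_up[OF s Nt] k1p_eq R_def using True by (simp add: algebra_simps)
  also have "\<dots> = complex_of_real (- (R * spr n (\<tau> y) * ((N + B3) * q ^ y)))"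
    unfolding betaz by simp
  finally show ?thesis using R0 spr_nonneg[OF le(2)] betaz_pos by (intro exI[of _ "R * spr n (\<tau> y) * ((N + B3) * q ^ y)"]) simp
qed (auto simp: k1p_eq)

lemma F2:
  assumes s: "\<sigma> \<in> C" "\<tau> \<in> C"
  shows "\<exists>r. r \<ge> 0 \<and> (k1 (Smm n) y \<sigma> \<tau> \<noteq> 0 \<longrightarrow> r > 0) \<and> cnj \<beta> * G \<sigma> \<tau> * k1 (Smm n) y \<sigma> \<tau> = complex_of_real (- r)"
proof (cases "agree_off {y} \<sigma> \<tau> \<and> \<tau> y = Suc (\<sigma> y)")
  case True
  have yb': "y \<in> {1..b}" using y1 yb by simp
  have le: "\<sigma> y \<le> n" "\<tau> y \<le> n" using cfg_le s yb' by auto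
  have "Nf \<sigma> + (n - \<tau> y) = Nf \<tau> + (n - \<sigma> y)" using Nf_agree[of "{y}" \<sigma> \<tau>] True yb' by simp
  then have Ns: "Nf \<sigma> = Suc (Nf \<tau>)" using True le by simp
  define R where "R = Pf \<sigma> * Pf \<tau> * (cmod z) ^ (2 * Nf \<tau>)"
  have R0: "R > 0" unfolding R_def using Pf_pos s z_nz by simp
  have sp: "spr n (\<sigma> y) > 0" using True le by (intro spr_pos) simp
  have "cnj \<beta> * G \<sigma> \<tau> * k1 (Smm n) y \<sigma> \<tau> = complex_of_real (R * spr n (\<sigma> y)) * (cnj \<beta> * cnj z)"
    unfolding G_dn[OF s Ns] k1m_eq R_def using True by (simp add: algebra_simps)
  also have "\<dots> = complex_of_real (- (R * spr n (\<sigma> y) * ((N + B3) * q ^ y)))"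
    unfolding cbetaz by simp
  finally show ?thesis using R0 sp betaz_pos by (intro exI[of _ "R * spr n (\<sigma> y) * ((N + B3) * q ^ y)"]) simp
qed (auto simp: k1m_eq)

lemma H1:
  assumes s: "\<sigma> \<in> C" "\<tau> \<in> C" and x: "x \<in> {1..<b}"
  shows "\<exists>r. r \<ge> 0 \<and> (k2 (Spm n) (Smm n) x \<sigma> \<tau> \<noteq> 0 \<longrightarrow> r > 0) \<and> G \<sigma> \<tau> * k2 (Spm n) (Smm n) x \<sigma> \<tau> = complex_of_real r"
proof (cases "agree_off {x, x + 1} \<sigma> \<tau> \<and> \<sigma> x = Suc (\<tau> x) \<and> \<tau> (x + 1) = Suc (\<sigma> (x + 1))")
  case True
  have xb: "x \<in> {1..b}" "x + 1 \<in> {1..b}" "{x, x + 1} \<subseteq> {1..b}" using x by auto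
  have le: "\<sigma> x \<le> n" "\<tau> x \<le> n" "\<sigma> (x + 1) \<le> n" "\<tau> (x + 1) \<le> n" using cfg_le s xb by auto
  have "Nf \<sigma> + (\<Sum>x\<in>{x, x + 1}. n - \<tau> x) = Nf \<tau> + (\<Sum>x\<in>{x, x + 1}. n - \<sigma> x)"
    using Nf_agree[OF xb(3)] True by blast
  then have Ne: "Nf \<sigma> = Nf \<tau>" using True le by simp
  define R where "R = Pf \<sigma> * Pf \<tau> * (cmod z) ^ (2 * Nf \<sigma>)"
  have R0: "R > 0" unfolding R_def using Pf_pos s z_nz by simp
  have sp: "spr n (\<tau> x) > 0" "spr n (\<sigma> (x + 1)) > 0" using True le by (auto intro: spr_pos)
  have "G \<sigma> \<tau> * k2 (Spm n) (Smm n) x \<sigma> \<tau> = complex_of_real (R * (spr n (\<tau> x) * spr n (\<sigma> (x + 1))))"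
    unfolding G_eq[OF s Ne] k2a_eq R_def using True by simp
  then show ?thesis using R0 sp by (intro exI[of _ "R * (spr n (\<tau> x) * spr n (\<sigma> (x + 1)))"]) simp
qed (auto simp: k2a_eq)

lemma H2:
  assumes s: "\<sigma> \<in> C" "\<tau> \<in> C" and x: "x \<in> {1..<b}"
  shows "\<exists>r. r \<ge> 0 \<and> (k2 (Smm n) (Spm n) x \<sigma> \<tau> \<noteq> 0 \<longrightarrow> r > 0) \<and> G \<sigma> \<tau> * k2 (Smm n) (Spm n) x \<sigma> \<tau> = complex_of_real r"
proof (cases "agree_off {x, x + 1} \<sigma> \<tau> \<and> \<tau> x = Suc (\<sigma> x) \<and> \<sigma> (x + 1) = Suc (\<tau> (x + 1))")
  case True
  have xb: "x \<in> {1..b}" "x + 1 \<in> {1..b}" "{x, x + 1} \<subseteq> {1..b}" using x by auto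
  have le: "\<sigma> x \<le> n" "\<tau> x \<le> n" "\<sigma> (x + 1) \<le> n" "\<tau> (x + 1) \<le> n" using cfg_le s xb by auto
  have "Nf \<sigma> + (\<Sum>x\<in>{x, x + 1}. n - \<tau> x) = Nf \<tau> + (\<Sum>x\<in>{x, x + 1}. n - \<sigma> x)"
    using Nf_agree[OF xb(3)] True by blast
  then have Ne: "Nf \<sigma> = Nf \<tau>" using True le by simp
  define R where "R = Pf \<sigma> * Pf \<tau> * (cmod z) ^ (2 * Nf \<sigma>)"
  have R0: "R > 0" unfolding R_def using Pf_pos s z_nz by simp
  have sp: "spr n (\<sigma> x) > 0" "spr n (\<tau> (x + 1)) > 0" using True le by (auto intro: spr_pos)
  have "G \<sigma> \<tau> * k2 (Smm n) (Spm n) x \<sigma> \<tau> = complex_of_real (R * (spr n (\<sigma> x) * spr n (\<tau> (x + 1))))"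
    unfolding G_eq[OF s Ne] k2b_eq R_def using True by simp
  then show ?thesis using R0 sp by (intro exI[of _ "R * (spr n (\<sigma> x) * spr n (\<tau> (x + 1)))"]) simp
qed (auto simp: k2b_eq)

end


context chain
begin

abbreviation "KK \<equiv> Kmat n \<Delta> b y B1 B2 B3"
abbreviation "k2a x \<equiv> k2 (Spm n) (Smm n) x"
abbreviation "k2b x \<equiv> k2 (Smm n) (Spm n) x"
abbreviation "k1p \<equiv> k1 (Spm n) y"
abbreviation "k1m \<equiv> k1 (Smm n) y"

lemma cb: "Complex B1 B2 = cnj \<beta>" unfolding \<beta>_def by (simp add: complex_eq_iff)

lemma Koff:
  assumes ne: "\<sigma> \<noteq> \<tau>"
  shows "KK \<sigma> \<tau> = - (complex_of_real (1 / \<Delta>) / 2) * (\<Sum>x\<in>{1..<b}. k2a x \<sigma> \<tau> + k2b x \<sigma> \<tau>)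
     + (\<beta> * k1p \<sigma> \<tau> + cnj \<beta> * k1m \<sigma> \<tau>) / 2"
proof -
  have h: "hopK n \<Delta> x \<sigma> \<tau> = complex_of_real (1 / \<Delta>) / 2 * (k2a x \<sigma> \<tau> + k2b x \<sigma> \<tau>)" for x
    unfolding hopK_def k2_S12 k2_S3_off[OF ne] dlt_def using ne by simp
  have sh: "(\<Sum>x\<in>{1..<b}. hopK n \<Delta> x \<sigma> \<tau>) = complex_of_real (1 / \<Delta>) / 2 * (\<Sum>x\<in>{1..<b}. k2a x \<sigma> \<tau> + k2b x \<sigma> \<tau>)"
    unfolding h by (simp add: sum_distrib_left)
  have e: "X + complex_of_real B1 * k1 (S1m n) y \<sigma> \<tau> + complex_of_real B2 * k1 (S2m n) y \<sigma> \<tau>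
      = X + (\<beta> * k1p \<sigma> \<tau> + cnj \<beta> * k1m \<sigma> \<tau>) / 2" for X
    by (simp only: add.assoc k1_S12 cb \<beta>_def[symmetric])
  show ?thesis unfolding Kmat_def e sh k1_S3_off[OF ne] by simp
qed

lemma a_form:
  assumes ne: "\<sigma> \<noteq> \<tau>"
  shows "cnj (\<psi> \<sigma>) * KK \<sigma> \<tau> * \<psi> \<tau> = - (complex_of_real (1 / \<Delta>) / 2) * (\<Sum>x\<in>{1..<b}. G \<sigma> \<tau> * k2a x \<sigma> \<tau> + G \<sigma> \<tau> * k2b x \<sigma> \<tau>)
     + (\<beta> * G \<sigma> \<tau> * k1p \<sigma> \<tau> + cnj \<beta> * G \<sigma> \<tau> * k1m \<sigma> \<tau>) / 2"
proof -
  have "cnj (\<psi> \<sigma>) * KK \<sigma> \<tau> * \<psi> \<tau> = G \<sigma> \<tau> * KK \<sigma> \<tau>" unfolding G_def by (simp add: mult_ac)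
  also have "\<dots> = - (complex_of_real (1 / \<Delta>) / 2) * (G \<sigma> \<tau> * (\<Sum>x\<in>{1..<b}. k2a x \<sigma> \<tau> + k2b x \<sigma> \<tau>))
     + (\<beta> * G \<sigma> \<tau> * k1p \<sigma> \<tau> + cnj \<beta> * G \<sigma> \<tau> * k1m \<sigma> \<tau>) / 2"
    unfolding Koff[OF ne] by (simp add: algebra_simps)
  also have "G \<sigma> \<tau> * (\<Sum>x\<in>{1..<b}. k2a x \<sigma> \<tau> + k2b x \<sigma> \<tau>) = (\<Sum>x\<in>{1..<b}. G \<sigma> \<tau> * k2a x \<sigma> \<tau> + G \<sigma> \<tau> * k2b x \<sigma> \<tau>)"
    by (simp add: sum_distrib_left distrib_left)
  finally show ?thesis .
qed

lemma a_real:
  assumes s: "\<sigma> \<in> C" "\<tau> \<in> C" and ne: "\<sigma> \<noteq> \<tau>"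
  shows "\<exists>r1 r2 r3 r4. (\<forall>x\<in>{1..<b}. r1 x \<ge> 0 \<and> (k2a x \<sigma> \<tau> \<noteq> 0 \<longrightarrow> r1 x > 0))
     \<and> (\<forall>x\<in>{1..<b}. r2 x \<ge> 0 \<and> (k2b x \<sigma> \<tau> \<noteq> 0 \<longrightarrow> r2 x > 0))
     \<and> r3 \<ge> 0 \<and> r4 \<ge> 0 \<and> (k1m \<sigma> \<tau> \<noteq> 0 \<longrightarrow> r4 > 0)
     \<and> cnj (\<psi> \<sigma>) * KK \<sigma> \<tau> * \<psi> \<tau> = complex_of_real (- (1 / \<Delta>) / 2 * (\<Sum>x\<in>{1..<b}. r1 x + r2 x) - (r3 + r4) / 2)"
proof -
  have "\<forall>x\<in>{1..<b}. \<exists>r. r \<ge> 0 \<and> (k2a x \<sigma> \<tau> \<noteq> 0 \<longrightarrow> r > 0) \<and> G \<sigma> \<tau> * k2a x \<sigma> \<tau> = complex_of_real r"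
    using H1[OF s] by blast
  from bchoice[OF this] obtain r1 where r1: "\<forall>x\<in>{1..<b}. r1 x \<ge> 0 \<and> (k2a x \<sigma> \<tau> \<noteq> 0 \<longrightarrow> r1 x > 0) \<and> G \<sigma> \<tau> * k2a x \<sigma> \<tau> = complex_of_real (r1 x)"
    by blast
  have "\<forall>x\<in>{1..<b}. \<exists>r. r \<ge> 0 \<and> (k2b x \<sigma> \<tau> \<noteq> 0 \<longrightarrow> r > 0) \<and> G \<sigma> \<tau> * k2b x \<sigma> \<tau> = complex_of_real r"
    using H2[OF s] by blast
  from bchoice[OF this] obtain r2 where r2: "\<forall>x\<in>{1..<b}. r2 x \<ge> 0 \<and> (k2b x \<sigma> \<tau> \<noteq> 0 \<longrightarrow> r2 x > 0) \<and> G \<sigma> \<tau> * k2b x \<sigma> \<tau> = complex_of_real (r2 x)"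
    by blast
  obtain r3 where r3: "r3 \<ge> 0" "\<beta> * G \<sigma> \<tau> * k1p \<sigma> \<tau> = complex_of_real (- r3)" using F1[OF s] by blast
  obtain r4 where r4: "r4 \<ge> 0" "k1m \<sigma> \<tau> \<noteq> 0 \<longrightarrow> r4 > 0" "cnj \<beta> * G \<sigma> \<tau> * k1m \<sigma> \<tau> = complex_of_real (- r4)"
    using F2[OF s] by blast
  have S: "(\<Sum>x\<in>{1..<b}. G \<sigma> \<tau> * k2a x \<sigma> \<tau> + G \<sigma> \<tau> * k2b x \<sigma> \<tau>) = complex_of_real (\<Sum>x\<in>{1..<b}. r1 x + r2 x)"
    unfolding of_real_sum by (rule sum.cong) (use r1 r2 in auto)
  have "cnj (\<psi> \<sigma>) * KK \<sigma> \<tau> * \<psi> \<tau> = complex_of_real (- (1 / \<Delta>) / 2 * (\<Sum>x\<in>{1..<b}. r1 x + r2 x) - (r3 + r4) / 2)"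
    unfolding a_form[OF ne] S r3(2) r4(3) by (simp add: field_simps)
  then show ?thesis using r1 r2 r3 r4 by blast
qed

lemma Delta_pos: "1 / \<Delta> > 0" using D1 by simp

lemma a_re:
  assumes s: "\<sigma> \<in> C" "\<tau> \<in> C" and ne: "\<sigma> \<noteq> \<tau>"
  shows "Im (cnj (\<psi> \<sigma>) * KK \<sigma> \<tau> * \<psi> \<tau>) = 0 \<and> Re (cnj (\<psi> \<sigma>) * KK \<sigma> \<tau> * \<psi> \<tau>) \<le> 0"
proof -
  obtain r1 r2 r3 r4 where r: "\<forall>x\<in>{1..<b}. r1 x \<ge> 0" "\<forall>x\<in>{1..<b}. r2 x \<ge> 0" "r3 \<ge> 0" "r4 \<ge> 0"
    and e: "cnj (\<psi> \<sigma>) * KK \<sigma> \<tau> * \<psi> \<tau> = complex_of_real (- (1 / \<Delta>) / 2 * (\<Sum>x\<in>{1..<b}. r1 x + r2 x) - (r3 + r4) / 2)"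
    using a_real[OF s ne] by blast
  have "(\<Sum>x\<in>{1..<b}. r1 x + r2 x) \<ge> 0" using r by (intro sum_nonneg) auto
  then have "(1 / \<Delta>) / 2 * (\<Sum>x\<in>{1..<b}. r1 x + r2 x) \<ge> 0" using Delta_pos by simp
  then show ?thesis unfolding e using r by simp
qed

lemma a_neg_field:
  assumes s: "\<sigma> \<in> C" "\<tau> \<in> C" and ne: "\<sigma> \<noteq> \<tau>" and k: "k1m \<sigma> \<tau> \<noteq> 0"
  shows "Re (cnj (\<psi> \<sigma>) * KK \<sigma> \<tau> * \<psi> \<tau>) < 0"
proof -
  obtain r1 r2 r3 r4 where r: "\<forall>x\<in>{1..<b}. r1 x \<ge> 0" "\<forall>x\<in>{1..<b}. r2 x \<ge> 0" "r3 \<ge> 0" "r4 > 0"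
    and e: "cnj (\<psi> \<sigma>) * KK \<sigma> \<tau> * \<psi> \<tau> = complex_of_real (- (1 / \<Delta>) / 2 * (\<Sum>x\<in>{1..<b}. r1 x + r2 x) - (r3 + r4) / 2)"
    using a_real[OF s ne] k by blast
  have "(\<Sum>x\<in>{1..<b}. r1 x + r2 x) \<ge> 0" using r by (intro sum_nonneg) auto
  then have "(1 / \<Delta>) / 2 * (\<Sum>x\<in>{1..<b}. r1 x + r2 x) \<ge> 0" using Delta_pos by simp
  then show ?thesis unfolding e using r by simp
qed

lemma a_neg_hop:
  assumes s: "\<sigma> \<in> C" "\<tau> \<in> C" and ne: "\<sigma> \<noteq> \<tau>" and x0: "x0 \<in> {1..<b}"
    and k: "k2a x0 \<sigma> \<tau> \<noteq> 0 \<or> k2b x0 \<sigma> \<tau> \<noteq> 0"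
  shows "Re (cnj (\<psi> \<sigma>) * KK \<sigma> \<tau> * \<psi> \<tau>) < 0"
proof -
  obtain r1 r2 r3 r4 where r: "\<forall>x\<in>{1..<b}. r1 x \<ge> 0 \<and> (k2a x \<sigma> \<tau> \<noteq> 0 \<longrightarrow> r1 x > 0)"
    "\<forall>x\<in>{1..<b}. r2 x \<ge> 0 \<and> (k2b x \<sigma> \<tau> \<noteq> 0 \<longrightarrow> r2 x > 0)" "r3 \<ge> 0" "r4 \<ge> 0"
    and e: "cnj (\<psi> \<sigma>) * KK \<sigma> \<tau> * \<psi> \<tau> = complex_of_real (- (1 / \<Delta>) / 2 * (\<Sum>x\<in>{1..<b}. r1 x + r2 x) - (r3 + r4) / 2)"
    using a_real[OF s ne] by blast
  have pos: "r1 x0 + r2 x0 > 0"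
  proof -
    have "r1 x0 \<ge> 0" "r2 x0 \<ge> 0" using r(1,2) x0 by auto
    moreover have "r1 x0 > 0 \<or> r2 x0 > 0" using r(1,2) x0 k by blast
    ultimately show ?thesis by linarith
  qed
  have "r1 x0 + r2 x0 \<le> (\<Sum>x\<in>{1..<b}. r1 x + r2 x)"
    using r(1,2) x0 by (intro member_le_sum) auto
  with pos have "(\<Sum>x\<in>{1..<b}. r1 x + r2 x) > 0" by linarith
  then have "(1 / \<Delta>) / 2 * (\<Sum>x\<in>{1..<b}. r1 x + r2 x) > 0" using Delta_pos by simp
  then show ?thesis unfolding e using r by simp
qed

lemma G_swap: "G \<tau> \<sigma> = cnj (G \<sigma> \<tau>)" unfolding G_def by simp

lemma a_sym:
  assumes s: "\<sigma> \<in> C" "\<tau> \<in> C" and ne: "\<sigma> \<noteq> \<tau>"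
  shows "cnj (\<psi> \<sigma>) * KK \<sigma> \<tau> * \<psi> \<tau> = cnj (\<psi> \<tau>) * KK \<tau> \<sigma> * \<psi> \<sigma>"
proof -
  have t1: "cnj (G \<sigma> \<tau>) * k2a x \<sigma> \<tau> = G \<sigma> \<tau> * k2a x \<sigma> \<tau>" if x: "x \<in> {1..<b}" for x
  proof -
    obtain r where "G \<sigma> \<tau> * k2a x \<sigma> \<tau> = complex_of_real r" using H1[OF s x] by blast
    then have "cnj (G \<sigma> \<tau> * k2a x \<sigma> \<tau>) = G \<sigma> \<tau> * k2a x \<sigma> \<tau>" by simp
    then show ?thesis by (simp add: cnj_k2a)
  qed
  have t2: "cnj (G \<sigma> \<tau>) * k2b x \<sigma> \<tau> = G \<sigma> \<tau> * k2b x \<sigma> \<tau>" if x: "x \<in> {1..<b}" for x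
  proof -
    obtain r where "G \<sigma> \<tau> * k2b x \<sigma> \<tau> = complex_of_real r" using H2[OF s x] by blast
    then have "cnj (G \<sigma> \<tau> * k2b x \<sigma> \<tau>) = G \<sigma> \<tau> * k2b x \<sigma> \<tau>" by simp
    then show ?thesis by (simp add: cnj_k2b)
  qed
  have t3: "\<beta> * cnj (G \<sigma> \<tau>) * k1m \<sigma> \<tau> = cnj \<beta> * G \<sigma> \<tau> * k1m \<sigma> \<tau>"
  proof -
    obtain r where "cnj \<beta> * G \<sigma> \<tau> * k1m \<sigma> \<tau> = complex_of_real (- r)" using F2[OF s] by blast
    then have "cnj (cnj \<beta> * G \<sigma> \<tau> * k1m \<sigma> \<tau>) = cnj \<beta> * G \<sigma> \<tau> * k1m \<sigma> \<tau>" by simp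
    then show ?thesis by (simp add: cnj_k1m)
  qed
  have t4: "cnj \<beta> * cnj (G \<sigma> \<tau>) * k1p \<sigma> \<tau> = \<beta> * G \<sigma> \<tau> * k1p \<sigma> \<tau>"
  proof -
    obtain r where "\<beta> * G \<sigma> \<tau> * k1p \<sigma> \<tau> = complex_of_real (- r)" using F1[OF s] by blast
    then have "cnj (\<beta> * G \<sigma> \<tau> * k1p \<sigma> \<tau>) = \<beta> * G \<sigma> \<tau> * k1p \<sigma> \<tau>" by simp
    then show ?thesis by (simp add: cnj_k1p)
  qed
  have ne': "\<tau> \<noteq> \<sigma>" using ne by simp
  have S: "(\<Sum>x\<in>{1..<b}. G \<tau> \<sigma> * k2a x \<tau> \<sigma> + G \<tau> \<sigma> * k2b x \<tau> \<sigma>) = (\<Sum>x\<in>{1..<b}. G \<sigma> \<tau> * k2a x \<sigma> \<tau> + G \<sigma> \<tau> * k2b x \<sigma> \<tau>)"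
    unfolding G_swap[where \<sigma>=\<sigma> and \<tau>=\<tau>] k2_swap[where \<sigma>=\<sigma> and \<tau>=\<tau>] k2_swap'[where \<sigma>=\<sigma> and \<tau>=\<tau>]
    by (rule sum.cong) (simp_all add: t1 t2)
  have "cnj (\<psi> \<tau>) * KK \<tau> \<sigma> * \<psi> \<sigma> = - (complex_of_real (1 / \<Delta>) / 2) * (\<Sum>x\<in>{1..<b}. G \<sigma> \<tau> * k2a x \<sigma> \<tau> + G \<sigma> \<tau> * k2b x \<sigma> \<tau>)
     + (\<beta> * cnj (G \<sigma> \<tau>) * k1m \<sigma> \<tau> + cnj \<beta> * cnj (G \<sigma> \<tau>) * k1p \<sigma> \<tau>) / 2"
    unfolding a_form[OF ne'] S unfolding G_swap[where \<sigma>=\<sigma> and \<tau>=\<tau>] k1_swap[where \<sigma>=\<sigma> and \<tau>=\<tau>] k1_swap'[where \<sigma>=\<sigma> and \<tau>=\<tau>] by (rule refl)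
  also have "\<dots> = cnj (\<psi> \<sigma>) * KK \<sigma> \<tau> * \<psi> \<tau>"
    unfolding a_form[OF ne] t3 t4 by (simp add: algebra_simps)
  finally show ?thesis by simp
qed

lemma eig_K: "\<sigma> \<in> C \<Longrightarrow> (\<Sum>\<tau>\<in>C. KK \<sigma> \<tau> * \<psi> \<tau>) = complex_of_real (- spin_j n * N) * \<psi> \<sigma>"
  unfolding C_def using Hpm_Kmat[of \<sigma> n b y \<Delta> B1 B2 B3 \<psi>] H_psi b1 y1 yb by simp

lemma gst_inst: "gst C KK \<psi> (- spin_j n * N)"
proof
  show "finite C" unfolding C_def by (rule finite_configs)
  show "\<forall>\<sigma>\<in>C. \<psi> \<sigma> \<noteq> 0" using psi_nz by blast
  show "\<forall>\<sigma>\<in>C. (\<Sum>\<tau>\<in>C. KK \<sigma> \<tau> * \<psi> \<tau>) = complex_of_real (- spin_j n * N) * \<psi> \<sigma>" using eig_K by blast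
  show "\<forall>\<sigma>\<in>C. \<forall>\<tau>\<in>C. \<sigma> \<noteq> \<tau> \<longrightarrow> Im (cnj (\<psi> \<sigma>) * KK \<sigma> \<tau> * \<psi> \<tau>) = 0" using a_re by blast
  show "\<forall>\<sigma>\<in>C. \<forall>\<tau>\<in>C. \<sigma> \<noteq> \<tau> \<longrightarrow> cnj (\<psi> \<sigma>) * KK \<sigma> \<tau> * \<psi> \<tau> = cnj (\<psi> \<tau>) * KK \<tau> \<sigma> * \<psi> \<sigma>"
    using a_sym by blast
  show "\<forall>\<sigma>\<in>C. \<forall>\<tau>\<in>C. \<sigma> \<noteq> \<tau> \<longrightarrow> Re (cnj (\<psi> \<sigma>) * KK \<sigma> \<tau> * \<psi> \<tau>) \<le> 0" using a_re by blast
qed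

end


context chain
begin

definition "T0 = restrict (\<lambda>_. n) {1..b}"
definition "dst x = (if x \<le> y then y - x else x - y)"
definition "Dp \<sigma> = (\<Sum>x\<in>{1..b}. (n - \<sigma> x) * (dst x + 1))"

lemma T0_C: "T0 \<in> C" unfolding T0_def C_def configs_def by auto

lemma Dp_agree:
  assumes "X \<subseteq> {1..b}" "agree_off X \<sigma> \<tau>"
  shows "Dp \<sigma> + (\<Sum>x\<in>X. (n - \<tau> x) * (dst x + 1)) = Dp \<tau> + (\<Sum>x\<in>X. (n - \<sigma> x) * (dst x + 1))"
proof -
  have r: "(\<Sum>x\<in>{1..b} - X. (n - \<sigma> x) * (dst x + 1)) = (\<Sum>x\<in>{1..b} - X. (n - \<tau> x) * (dst x + 1))"
    using assms(2) unfolding agree_off_def by (intro sum.cong) auto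
  have "Dp \<sigma> = (\<Sum>x\<in>{1..b} - X. (n - \<sigma> x) * (dst x + 1)) + (\<Sum>x\<in>X. (n - \<sigma> x) * (dst x + 1))"
    unfolding Dp_def using assms(1) by (intro sum.subset_diff) auto
  moreover have "Dp \<tau> = (\<Sum>x\<in>{1..b} - X. (n - \<tau> x) * (dst x + 1)) + (\<Sum>x\<in>X. (n - \<tau> x) * (dst x + 1))"
    unfolding Dp_def using assms(1) by (intro sum.subset_diff) auto
  ultimately show ?thesis using r by simp
qed

abbreviation "aa \<sigma> \<tau> \<equiv> cnj (\<psi> \<sigma>) * KK \<sigma> \<tau> * \<psi> \<tau>"

lemma hop_move:
  assumes s: "\<sigma> \<in> C" and x: "x \<in> {1..b}" and x': "x' \<in> {1..b}" and xx: "x \<noteq> x'"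
    and lt: "\<sigma> x < n" and full: "\<sigma> x' = n" and d: "dst x = Suc (dst x')"
  defines "\<tau> \<equiv> \<sigma>(x := Suc (\<sigma> x), x' := n - 1)"
  shows "\<tau> \<in> C" "\<sigma> \<noteq> \<tau>" "Dp \<tau> < Dp \<sigma>" "agree_off {x, x'} \<sigma> \<tau>"
proof -
  have t1: "\<sigma>(x := Suc (\<sigma> x)) \<in> configs n b" using s x lt configs_upd unfolding C_def by auto
  show "\<tau> \<in> C" unfolding \<tau>_def C_def using configs_upd[OF t1 x'] by simp
  show "\<sigma> \<noteq> \<tau>" unfolding \<tau>_def using xx by (auto simp: fun_eq_iff)
  show ag: "agree_off {x, x'} \<sigma> \<tau>" unfolding \<tau>_def agree_off_def by simp
  have "{x, x'} \<subseteq> {1..b}" using x x' by simp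
  from Dp_agree[OF this ag] have R:
    "Dp \<sigma> + ((n - \<tau> x) * (dst x + 1) + (n - \<tau> x') * (dst x' + 1)) = Dp \<tau> + ((n - \<sigma> x) * (dst x + 1) + (n - \<sigma> x') * (dst x' + 1))"
    using xx by simp
  have tx: "\<tau> x = Suc (\<sigma> x)" "\<tau> x' = n - 1" unfolding \<tau>_def using xx by auto
  have n11: "n - (n - 1) = 1" using n1 by simp
  obtain A where A: "n - \<sigma> x = Suc A" "n - Suc (\<sigma> x) = A" using lt by (intro that[of "n - Suc (\<sigma> x)"]) auto
  have "Dp \<sigma> + (A * (Suc (dst x') + 1) + 1 * (dst x' + 1)) = Dp \<tau> + (Suc A * (Suc (dst x') + 1) + 0 * (dst x' + 1))"
    using R unfolding tx full d n11 A diff_self_eq_0 .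
  then show "Dp \<tau> < Dp \<sigma>" by simp
qed

lemma move:
  assumes s: "\<sigma> \<in> C" and ne: "\<sigma> \<noteq> T0"
  shows "\<exists>\<tau>\<in>C. \<sigma> \<noteq> \<tau> \<and> Re (aa \<sigma> \<tau>) < 0 \<and> Dp \<tau> < Dp \<sigma>"
proof -
  have "\<exists>x. x \<in> {1..b} \<and> \<sigma> x < n"
  proof (rule ccontr)
    assume "\<not> ?thesis"
    then have "\<And>x. x \<in> {1..b} \<Longrightarrow> \<sigma> x = T0 x" using cfg_le[OF s] unfolding T0_def by force
    then have "\<sigma> = T0" using configs_eqI[of \<sigma> n b T0] s T0_C unfolding C_def by blast
    then show False using ne by simp
  qed
  then obtain x where xP: "x \<in> {1..b} \<and> \<sigma> x < n" and xmin: "\<And>x''. x'' \<in> {1..b} \<and> \<sigma> x'' < n \<Longrightarrow> dst x \<le> dst x''"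
    using ex_has_least_nat[of "\<lambda>x. x \<in> {1..b} \<and> \<sigma> x < n" _ dst] by blast
  have x: "x \<in> {1..b}" and lt: "\<sigma> x < n" using xP by auto
  have yb': "y \<in> {1..b}" using y1 yb by simp
  consider (eq) "x = y" | (less) "x < y" | (gr) "y < x" by linarith
  then show ?thesis
  proof cases
    case eq
    define \<tau> where "\<tau> = \<sigma>(y := Suc (\<sigma> y))"
    have tC: "\<tau> \<in> C" unfolding \<tau>_def C_def using configs_upd[of \<sigma> n b y "Suc (\<sigma> y)"] s yb' lt eq unfolding C_def by auto
    have sne: "\<sigma> \<noteq> \<tau>" unfolding \<tau>_def by (auto simp: fun_eq_iff)
    have ag: "agree_off {y} \<sigma> \<tau>" unfolding \<tau>_def agree_off_def by simp
    have "k1m \<sigma> \<tau> = complex_of_real (spr n (\<sigma> y))" unfolding k1m_eq \<tau>_def using ag \<tau>_def by simp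
    moreover have "spr n (\<sigma> y) > 0" using lt eq by (intro spr_pos) simp
    ultimately have "k1m \<sigma> \<tau> \<noteq> 0" by simp
    then have neg: "Re (aa \<sigma> \<tau>) < 0" by (rule a_neg_field[OF s tC sne])
    have "Dp \<sigma> + (n - \<tau> y) * (dst y + 1) = Dp \<tau> + (n - \<sigma> y) * (dst y + 1)"
      using Dp_agree[of "{y}" \<sigma> \<tau>] yb' ag by simp
    moreover have "\<tau> y = Suc (\<sigma> y)" "dst y = 0" unfolding \<tau>_def dst_def by auto
    ultimately have "Dp \<tau> < Dp \<sigma>" using lt eq by simp
    then show ?thesis using tC sne neg by blast
  next
    case less
    define x' where "x' = x + 1"
    have x': "x' \<in> {1..b}" unfolding x'_def using less yb x by auto
    have dd: "dst x = Suc (dst x')" unfolding dst_def x'_def using less by auto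
    have full: "\<sigma> x' = n"
    proof (rule ccontr)
      assume "\<sigma> x' \<noteq> n"
      then have "\<sigma> x' < n" using cfg_le[OF s x'] by simp
      then have "dst x \<le> dst x'" using xmin x' by blast
      then show False using dd by simp
    qed
    define \<tau> where "\<tau> = \<sigma>(x := Suc (\<sigma> x), x' := n - 1)"
    have xx: "x \<noteq> x'" unfolding x'_def by simp
    note hm = hop_move[OF s x x' xx lt full dd, folded \<tau>_def]
    have xb: "x \<in> {1..<b}" using x' x unfolding x'_def by auto
    have "k2b x \<sigma> \<tau> = complex_of_real (spr n (\<sigma> x) * spr n (\<tau> (x + 1)))"
      unfolding k2b_eq using hm(4) full n1 unfolding \<tau>_def x'_def by auto
    moreover have "spr n (\<sigma> x) > 0" using lt by (intro spr_pos)
    moreover have "spr n (\<tau> (x + 1)) > 0" unfolding \<tau>_def x'_def using n1 by (intro spr_pos) simp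
    ultimately have "k2b x \<sigma> \<tau> \<noteq> 0" by simp
    then have "Re (aa \<sigma> \<tau>) < 0" using a_neg_hop[OF s hm(1,2) xb] by blast
    then show ?thesis using hm by blast
  next
    case gr
    define w where "w = x - 1"
    have wx: "x = w + 1" unfolding w_def using gr by simp
    have w: "w \<in> {1..b}" unfolding w_def using gr y1 x by auto
    have dd: "dst x = Suc (dst w)" unfolding dst_def w_def using gr by auto
    have full: "\<sigma> w = n"
    proof (rule ccontr)
      assume "\<sigma> w \<noteq> n"
      then have "\<sigma> w < n" using cfg_le[OF s w] by simp
      then have "dst x \<le> dst w" using xmin w by blast
      then show False using dd by simp
    qed
    define \<tau> where "\<tau> = \<sigma>(x := Suc (\<sigma> x), w := n - 1)"
    have xx: "x \<noteq> w" unfolding wx by simp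
    note hm = hop_move[OF s x w xx lt full dd, folded \<tau>_def]
    have wb: "w \<in> {1..<b}" using w x wx by auto
    have ag: "agree_off {w, w + 1} \<sigma> \<tau>" using hm(4) wx by (simp add: insert_commute)
    have "k2a w \<sigma> \<tau> = complex_of_real (spr n (\<tau> w) * spr n (\<sigma> (w + 1)))"
      unfolding k2a_eq using ag full n1 xx unfolding \<tau>_def wx by auto
    moreover have "spr n (\<tau> w) > 0" unfolding \<tau>_def using n1 xx by (intro spr_pos) simp
    moreover have "spr n (\<sigma> (w + 1)) > 0" using lt wx by (intro spr_pos) simp
    ultimately have "k2a w \<sigma> \<tau> \<noteq> 0" by simp
    then have "Re (aa \<sigma> \<tau>) < 0" using a_neg_hop[OF s hm(1,2) wb] by blast
    then show ?thesis using hm by blast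
  qed
qed

lemma const:
  assumes h: "\<And>\<sigma> \<tau>. \<sigma> \<in> C \<Longrightarrow> \<tau> \<in> C \<Longrightarrow> \<sigma> \<noteq> \<tau> \<Longrightarrow> Re (aa \<sigma> \<tau>) < 0 \<Longrightarrow> f \<tau> = f \<sigma>"
  shows "\<sigma> \<in> C \<Longrightarrow> f \<sigma> = f T0"
proof (induction "Dp \<sigma>" arbitrary: \<sigma> rule: less_induct)
  case less
  show ?case
  proof (cases "\<sigma> = T0")
    case False
    then obtain \<tau> where t: "\<tau> \<in> C" "\<sigma> \<noteq> \<tau>" "Re (aa \<sigma> \<tau>) < 0" "Dp \<tau> < Dp \<sigma>"
      using move[OF less.prems] by blast
    have "f \<tau> = f \<sigma>" using h[OF less.prems t(1-3)] .
    moreover have "f \<tau> = f T0" using less.hyps[OF t(4) t(1)] .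
    ultimately show ?thesis by simp
  qed simp
qed

end


theorem proposition2p1:
  fixes n b y :: nat and \<Delta> B1 B2 B3 :: real
  assumes "n \<ge> 1" and "\<Delta> > 1" and "b \<ge> 1" and "1 \<le> y" and "y \<le> b"
    and "B1\<^sup>2 + B2\<^sup>2 > 0"
  defines "q \<equiv> qpar \<Delta>"
  defines "H \<equiv> Hpm n \<Delta> b y B1 B2 B3"
  defines "E \<equiv> - spin_j n * normB B1 B2 B3"
  defines "z \<equiv> - complex_of_real (normB B1 B2 B3 + B3) / Complex B1 (- B2)
                * complex_of_real (q ^ y)"
  shows "is_eigen n b H (complex_of_real E) (psi n q b z)
     \<and> (\<forall>ev v. is_eigen n b H ev v \<longrightarrow> E \<le> Re ev)
     \<and> (\<forall>v. is_eigen n b H (complex_of_real E) v \<longrightarrow>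
            (\<exists>c. \<forall>\<sigma>\<in>configs n b. v \<sigma> = c * psi n q b z \<sigma>))"
proof -
  interpret Ch: chain n b y \<Delta> B1 B2 B3 using assms(1-6) by unfold_locales
  have qq: "q = Ch.q" unfolding q_def Ch.q_def ..
  have zz: "z = Ch.z" unfolding z_def Ch.z_def Ch.N_def qq ..
  have EE: "E = - spin_j n * Ch.N" unfolding E_def Ch.N_def ..
  have CC: "configs n b = Ch.C" unfolding Ch.C_def ..
  have yb: "y \<in> {1..b}" using assms(4,5) by simp
  have rep: "H v \<sigma> = (\<Sum>\<tau>\<in>Ch.C. Ch.KK \<sigma> \<tau> * v \<tau>)" if "\<sigma> \<in> Ch.C" for v \<sigma>
    unfolding H_def using Hpm_Kmat[of \<sigma> n b y \<Delta> B1 B2 B3 v] that assms(3) yb unfolding Ch.C_def by simp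
  note G = Ch.gst_inst
  have P1: "is_eigen n b H (complex_of_real E) (psi n q b z)"
    unfolding is_eigen_def in_space_def qq zz CC
  proof (intro conjI ballI allI impI)
    fix \<sigma> assume "\<sigma> \<notin> Ch.C"
    then show "Ch.\<psi> \<sigma> = 0" unfolding psi_def Ch.C_def by simp
  next
    show "\<exists>\<sigma>\<in>Ch.C. Ch.\<psi> \<sigma> \<noteq> 0" using Ch.T0_C Ch.psi_nz by blast
  next
    fix \<sigma> assume "\<sigma> \<in> Ch.C"
    then show "H Ch.\<psi> \<sigma> = complex_of_real E * Ch.\<psi> \<sigma>"
      unfolding H_def EE using Ch.H_psi unfolding Ch.C_def by simp
  qed
  have P2: "E \<le> Re ev" if ei: "is_eigen n b H ev v" for ev v
  proof -
    have ev: "\<forall>\<sigma>\<in>Ch.C. (\<Sum>\<tau>\<in>Ch.C. Ch.KK \<sigma> \<tau> * v \<tau>) = ev * v \<sigma>"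
      using ei rep unfolding is_eigen_def CC by simp
    have ne: "\<exists>\<sigma>\<in>Ch.C. v \<sigma> \<noteq> 0" using ei unfolding is_eigen_def CC by simp
    show ?thesis unfolding EE by (rule gst.ground[OF G ev ne])
  qed
  have P3: "\<exists>c. \<forall>\<sigma>\<in>configs n b. v \<sigma> = c * psi n q b z \<sigma>" if ei: "is_eigen n b H (complex_of_real E) v" for v
  proof -
    have ev: "\<forall>\<sigma>\<in>Ch.C. (\<Sum>\<tau>\<in>Ch.C. Ch.KK \<sigma> \<tau> * v \<tau>) = complex_of_real (- spin_j n * Ch.N) * v \<sigma>"
      using ei rep unfolding is_eigen_def CC EE by simp
    define f where "f \<sigma> = v \<sigma> / Ch.\<psi> \<sigma>" for \<sigma>
    have h: "f \<tau> = f \<sigma>" if "\<sigma> \<in> Ch.C" "\<tau> \<in> Ch.C" "\<sigma> \<noteq> \<tau>" "Re (Ch.aa \<sigma> \<tau>) < 0" for \<sigma> \<tau>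
      unfolding f_def by (rule gst.ground_eq[OF G ev]) (use that in auto)
    have "\<forall>\<sigma>\<in>Ch.C. v \<sigma> = f Ch.T0 * Ch.\<psi> \<sigma>"
    proof
      fix \<sigma> assume s: "\<sigma> \<in> Ch.C"
      have "f \<sigma> = f Ch.T0" by (rule Ch.const[OF h s])
      moreover have "v \<sigma> = f \<sigma> * Ch.\<psi> \<sigma>" unfolding f_def using Ch.psi_nz[OF s] by simp
      ultimately show "v \<sigma> = f Ch.T0 * Ch.\<psi> \<sigma>" by simp
    qed
    then show ?thesis unfolding qq zz CC by blast
  qed
  show ?thesis using P1 P2 P3 by blast
qed


end
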